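(* An interval order is better-quasi-ordered if and only if it is well-quasi-ordered.
   Context: A poset $P$ is an interval order if it is isomorphic to a set of nonempty intervals of some chain $C$, ordered by $I<J$ iff $x<y$ for every $x\in I$ and every $y\in J$. A quasi-ordered set is well-quasi-ordered (wqo) if it is well-founded and has no infinite antichain. Barriers and bqo: finite subsets of $\mathbb{N}$ are identified with their increasing enumerations. For finite $s,t\subseteq\mathbb{N}$ write $s\triangleleft t$ if there is a finite $r\subseteq\mathbb{N}$ such that $s$ is a proper initial segment of $r$ and $t$ is $r$ with its least element removed. A barrier is an infinite set $B$ of finite subsets of $\mathbb{N}$, no member of which is a proper subset of another, such that every infinite $X\subseteq\bigcup B$ has a nonempty initial segment belonging to $B$. A barrier is well-ordered by the lexicographic order; its order type is the type of this well-order. A map $f$ from a barrier $B$ into a quasi-ordered set $Q$ is good if there exist $s,t\in B$ with $s\triangleleft t$ and $f(s)\leq f(t)$, and bad otherwise. For a countable ordinal $\alpha$, $Q$ is $\alpha$-bqo if every map from a barrier of order type at most $\alpha$ into $Q$ is good; $Q$ is better-quasi-ordered (bqo) if it is $\alpha$-bqo for every countable ordinal $\alpha$. *)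

theory Defs
  imports Main "HOL-Library.Countable_Set"
begin

definition antichain_on :: "'a set \<Rightarrow> 'a rel \<Rightarrow> 'a set \<Rightarrow> bool" where
  "antichain_on A r S \<longleftrightarrow> S \<subseteq> A \<and>
     (\<forall>x\<in>S. \<forall>y\<in>S. x \<noteq> y \<longrightarrow> (x, y) \<notin> r \<and> (y, x) \<notin> r)"

definition strict_part :: "'a set \<Rightarrow> 'a rel \<Rightarrow> 'a rel" where
  "strict_part A r = {(x, y). x \<in> A \<and> y \<in> A \<and> (x, y) \<in> r \<and> (y, x) \<notin> r}"

definition wqo_on :: "'a set \<Rightarrow> 'a rel \<Rightarrow> bool" where
  "wqo_on A r \<longleftrightarrow> preorder_on A r \<and> wf (strict_part A r) \<and>
     (\<forall>S. antichain_on A r S \<longrightarrow> finite S)"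

text \<open>Finite subsets of nat are identified with their increasing enumerations.
s is an initial segment of X (X possibly infinite).\<close>
definition init_seg :: "nat set \<Rightarrow> nat set \<Rightarrow> bool" where
  "init_seg s X \<longleftrightarrow> s \<subseteq> X \<and> (\<forall>x\<in>s. \<forall>y\<in>X. y < x \<longrightarrow> y \<in> s)"

definition shift_rel :: "nat set \<Rightarrow> nat set \<Rightarrow> bool" (infix \<open>\<lhd>\<close> 50) where
  "s \<lhd> t \<longleftrightarrow> (\<exists>r. finite r \<and> init_seg s r \<and> s \<noteq> r \<and> t = r - {Min r})"

definition barrier :: "nat set set \<Rightarrow> bool" where
  "barrier B \<longleftrightarrow> infinite B \<and> (\<forall>s\<in>B. finite s) \<and>
     (\<forall>s\<in>B. \<forall>t\<in>B. \<not> s \<subset> t) \<and>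
     (\<forall>X. X \<subseteq> \<Union>B \<longrightarrow> infinite X \<longrightarrow> (\<exists>s\<in>B. s \<noteq> {} \<and> init_seg s X))"

definition lex_rel :: "nat set set \<Rightarrow> nat set rel" where
  "lex_rel B = {(s, t). s \<in> B \<and> t \<in> B \<and>
     (s = t \<or> (sorted_list_of_set s, sorted_list_of_set t) \<in> lexord {(a, b). a < b})}"

definition good :: "'a rel \<Rightarrow> nat set set \<Rightarrow> (nat set \<Rightarrow> 'a) \<Rightarrow> bool" where
  "good r B f \<longleftrightarrow> (\<exists>s\<in>B. \<exists>t\<in>B. s \<lhd> t \<and> (f s, f t) \<in> r)"

text \<open>Countable ordinals are represented by well-orders on subsets of nat.
The order type of a barrier being at most alpha is (lex_rel B, alpha) in ordLeq.\<close>
definition alpha_bqo :: "nat rel \<Rightarrow> 'a set \<Rightarrow> 'a rel \<Rightarrow> bool" where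
  "alpha_bqo \<alpha> A r \<longleftrightarrow> (\<forall>B f. barrier B \<longrightarrow> (lex_rel B, \<alpha>) \<in> ordLeq \<longrightarrow> f ` B \<subseteq> A \<longrightarrow> good r B f)"

definition bqo_on :: "'a set \<Rightarrow> 'a rel \<Rightarrow> bool" where
  "bqo_on A r \<longleftrightarrow> preorder_on A r \<and>
     (\<forall>\<alpha>::nat rel. Well_order \<alpha> \<longrightarrow> countable (Field \<alpha>) \<longrightarrow> alpha_bqo \<alpha> A r)"

definition interval_of :: "'c::linorder set \<Rightarrow> 'c set \<Rightarrow> bool" where
  "interval_of C I \<longleftrightarrow> I \<noteq> {} \<and> I \<subseteq> C \<and>
     (\<forall>x\<in>I. \<forall>z\<in>I. \<forall>y\<in>C. x \<le> y \<and> y \<le> z \<longrightarrow> y \<in> I)"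

definition interval_order_in :: "'a set \<Rightarrow> 'a rel \<Rightarrow> 'c::linorder set \<Rightarrow> bool" where
  "interval_order_in A r C \<longleftrightarrow> partial_order_on A r \<and>
     (\<exists>f. inj_on f A \<and> (\<forall>x\<in>A. interval_of C (f x)) \<and>
        (\<forall>x\<in>A. \<forall>y\<in>A. (x, y) \<in> r \<longleftrightarrow> x = y \<or> (\<forall>u\<in>f x. \<forall>v\<in>f y. u < v)))"

end

theory Submission
  imports Defs
begin

definition sing :: "nat set set" where "sing = {{n} | n. True}"

lemma lex_sing: "lex_rel sing = dir_image natLeq (\<lambda>n. {n})"
  unfolding lex_rel_def sing_def dir_image_def natLeq_def
  by (auto simp: lexord_cons_cons)

lemma sing_ordLeq: "(lex_rel sing, natLeq) \<in> ordLeq"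
proof -
  have "(natLeq, dir_image natLeq (\<lambda>n. {n})) \<in> ordIso"
    by (rule dir_image_ordIso[OF natLeq_Well_order]) (auto simp: inj_on_def)
  then show ?thesis unfolding lex_sing
    using ordIso_symmetric ordIso_imp_ordLeq by blast
qed

lemma sing_barrier: "barrier sing"
proof -
  have inf: "infinite sing"
  proof
    assume "finite sing"
    then have "finite (\<Union>sing)" unfolding sing_def by auto
    moreover have "\<Union>sing = UNIV" unfolding sing_def by auto
    ultimately show False by simp
  qed
  show ?thesis unfolding barrier_def
  proof (intro conjI allI impI)
    fix X :: "nat set" assume "X \<subseteq> \<Union>sing" "infinite X"
    then have "X \<noteq> {}" by auto
    define m where "m = (LEAST x. x \<in> X)"
    have m: "m \<in> X" "\<And>y. y \<in> X \<Longrightarrow> m \<le> y"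
      using \<open>X \<noteq> {}\<close> unfolding m_def by (auto intro: LeastI Least_le)
    show "\<exists>s\<in>sing. s \<noteq> {} \<and> init_seg s X"
      apply (rule bexI[of _ "{m}"])
      using m apply (force simp: init_seg_def)
      by (auto simp: sing_def)
  qed (use inf in \<open>auto simp: sing_def\<close>)
qed

lemma shift_sing: assumes "{m} \<lhd> {n}" shows "m < n"
proof -
  obtain r where r: "finite r" "init_seg {m} r" "{m} \<noteq> r" "{n} = r - {Min r}"
    using assms unfolding shift_rel_def by blast
  have "m \<in> r" using r(2) by (auto simp: init_seg_def)
  then have "r \<noteq> {}" by auto
  have "Min r = m"
  proof (rule ccontr)
    assume "Min r \<noteq> m"
    have "Min r \<in> r" using Min_in[OF r(1) \<open>r \<noteq> {}\<close>] .
    moreover have "Min r \<le> m" using Min_le[OF r(1) \<open>m \<in> r\<close>] .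
    ultimately show False using r(2) \<open>Min r \<noteq> m\<close> by (auto simp: init_seg_def)
  qed
  then have "n \<in> r" "n \<noteq> m" using r(4) by auto
  then show ?thesis using \<open>Min r = m\<close> Min_le[OF r(1)] by force
qed

lemma bqo_seq:
  fixes g :: "nat \<Rightarrow> 'a"
  assumes "bqo_on A r" "\<And>i. g i \<in> A"
  shows "\<exists>i j. i < j \<and> (g i, g j) \<in> r"
proof -
  have "alpha_bqo natLeq A r"
    using assms(1) natLeq_Well_order unfolding bqo_on_def by (simp add: Field_natLeq)
  moreover have "(\<lambda>s. g (Min s)) ` sing \<subseteq> A" using assms(2) by auto
  ultimately have "good r sing (\<lambda>s. g (Min s))"
    unfolding alpha_bqo_def using sing_barrier sing_ordLeq by blast
  then obtain s t where "s \<in> sing" "t \<in> sing" "s \<lhd> t" "(g (Min s), g (Min t)) \<in> r"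
    unfolding good_def by blast
  then obtain m n where "s = {m}" "t = {n}" unfolding sing_def by blast
  then show ?thesis using \<open>s \<lhd> t\<close> shift_sing \<open>(g (Min s), g (Min t)) \<in> r\<close> by auto
qed

lemma bqo_imp_wqo:
  assumes "bqo_on A r"
  shows "wqo_on A r"
proof -
  have pre: "preorder_on A r" using assms unfolding bqo_on_def by simp
  then have tr: "trans r" and rf: "refl_on A r" unfolding preorder_on_def by auto
  have wf: "wf (strict_part A r)"
  proof (rule ccontr)
    assume "\<not> wf (strict_part A r)"
    then obtain g where g: "\<And>i. (g (Suc i), g i) \<in> strict_part A r"
      unfolding wf_iff_no_infinite_down_chain by blast
    have gA: "\<And>i. g i \<in> A" using g unfolding strict_part_def by blast
    have ch: "(g j, g i) \<in> r \<and> (g i, g j) \<notin> r" if "i < j" for i j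
      using that
    proof (induction j)
      case 0 then show ?case by simp
    next
      case (Suc j)
      have s: "(g (Suc j), g j) \<in> r" "(g j, g (Suc j)) \<notin> r"
        using g[of j] unfolding strict_part_def by auto
      show ?case
      proof (cases "i = j")
        case True then show ?thesis using s by simp
      next
        case False
        then have "(g j, g i) \<in> r \<and> (g i, g j) \<notin> r" using Suc by simp
        then show ?thesis using s tr unfolding trans_def by blast
      qed
    qed
    show False using bqo_seq[OF assms gA] ch by blast
  qed
  have ac: "finite S" if "antichain_on A r S" for S
  proof (rule ccontr)
    assume "infinite S"
    then obtain g :: "nat \<Rightarrow> 'a" where "inj g" "range g \<subseteq> S"
      using infinite_countable_subset by blast
    then have gA: "\<And>i. g i \<in> A" using that unfolding antichain_on_def by blast
    obtain i j where "i < j" "(g i, g j) \<in> r" using bqo_seq[OF assms gA] by blast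
    moreover have "g i \<noteq> g j" using \<open>inj g\<close> \<open>i < j\<close> by (auto dest: injD)
    ultimately show False using that \<open>range g \<subseteq> S\<close> unfolding antichain_on_def by blast
  qed
  show ?thesis unfolding wqo_on_def using pre wf ac by blast
qed



lemma init_seg_comp:
  assumes "init_seg s X" "init_seg t X" shows "s \<subseteq> t \<or> t \<subseteq> s"
proof (rule ccontr)
  assume "\<not> (s \<subseteq> t \<or> t \<subseteq> s)"
  then obtain x y where "x \<in> s" "x \<notin> t" "y \<in> t" "y \<notin> s" by blast
  then show False using assms unfolding init_seg_def
    by (metis linorder_neqE_nat subsetD)
qed

lemma init_seg_trans: "init_seg s t \<Longrightarrow> init_seg t X \<Longrightarrow> init_seg s X"
  unfolding init_seg_def by blast

lemma init_seg_refl: "init_seg s s" unfolding init_seg_def by blast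

lemma barrier_antichain: "barrier B \<Longrightarrow> s \<in> B \<Longrightarrow> t \<in> B \<Longrightarrow> s \<subseteq> t \<Longrightarrow> s = t"
  unfolding barrier_def by (meson psubsetI)

lemma barrier_nempty: assumes "barrier B" shows "{} \<notin> B"
proof
  assume "{} \<in> B"
  have "infinite B" using assms unfolding barrier_def by blast
  then obtain s where "s \<in> B" "s \<noteq> {}"
    by (metis finite.emptyI finite_insert insert_absorb insert_iff subsetI finite_subset)
  then show False using \<open>{} \<in> B\<close> barrier_antichain[OF assms] by blast
qed

lemma barrier_unique:
  assumes "barrier B" "s \<in> B" "t \<in> B" "init_seg s X" "init_seg t X" shows "s = t"
  using init_seg_comp[OF assms(4,5)] barrier_antichain[OF assms(1)] assms(2,3) by blast

definition binit :: "nat set set \<Rightarrow> nat set \<Rightarrow> nat set" where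
  "binit B L = (THE s. s \<in> B \<and> init_seg s L)"

lemma binit_eq:
  assumes "barrier B" "s \<in> B" "init_seg s L" shows "binit B L = s"
  unfolding binit_def using barrier_unique[OF assms(1)] assms(2,3)
  by (intro the_equality) auto

lemma binit_ex:
  assumes "barrier B" "L \<subseteq> \<Union>B" "infinite L"
  shows "\<exists>s\<in>B. init_seg s L"
  using assms unfolding barrier_def by blast

lemma binit:
  assumes "barrier B" "L \<subseteq> \<Union>B" "infinite L"
  shows "binit B L \<in> B" "init_seg (binit B L) L" "binit B L \<noteq> {}" "finite (binit B L)"
proof -
  obtain s where "s \<in> B" "init_seg s L" using binit_ex[OF assms] by blast
  then have "binit B L = s" using binit_eq[OF assms(1)] by blast
  then show "binit B L \<in> B" "init_seg (binit B L) L" using \<open>s \<in> B\<close> \<open>init_seg s L\<close> by auto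
  then show "binit B L \<noteq> {}" "finite (binit B L)"
    using barrier_nempty[OF assms(1)] assms(1) unfolding barrier_def by auto
qed

section \<open>Fusion\<close>

definition mn :: "nat set \<Rightarrow> nat" where "mn M = (LEAST x. x \<in> M)"

lemma mn: "M \<noteq> {} \<Longrightarrow> mn M \<in> M" "y \<in> M \<Longrightarrow> mn M \<le> y"
  unfolding mn_def by (auto intro: LeastI Least_le)

lemma infinite_tail: assumes "infinite (N::nat set)" shows "infinite {y\<in>N. x<y}"
proof
  assume "finite {y\<in>N. x<y}"
  moreover have "finite {..x}" by simp
  ultimately have "finite ({y\<in>N. x<y} \<union> {..x})" by blast
  moreover have "N \<subseteq> {y\<in>N. x<y} \<union> {..x}" by auto
  ultimately show False using assms finite_subset by blast
qed

lemma fusion: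
  fixes I :: "nat set \<Rightarrow> nat set \<Rightarrow> bool"
  assumes "I p0 M0" "infinite M0"
  and step: "\<And>p M. I p M \<Longrightarrow> infinite M \<Longrightarrow> \<exists>x N. x \<in> M \<and> N \<subseteq> M \<and> infinite N \<and> (\<forall>y\<in>N. x < y) \<and> I (insert x p) N"
  shows "\<exists>xs Ms. Ms 0 = M0 \<and> (\<forall>k. xs k \<in> Ms k \<and> Ms (Suc k) \<subseteq> Ms k \<and> infinite (Ms k) \<and>
      (\<forall>y\<in>Ms (Suc k). xs k < y) \<and> I (p0 \<union> xs ` {..<k}) (Ms k))"
proof -
  define ch where "ch = (\<lambda>pM. SOME xN. fst xN \<in> snd pM \<and> snd xN \<subseteq> snd pM \<and> infinite (snd xN) \<and>
     (\<forall>y\<in>snd xN. fst xN < y) \<and> I (insert (fst xN) (fst pM)) (snd xN))"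
  define st where "st = rec_nat (p0, M0) (\<lambda>_ pM. (insert (fst (ch pM)) (fst pM), snd (ch pM)))"
  have st0: "st 0 = (p0, M0)" unfolding st_def by simp
  have stS: "st (Suc k) = (insert (fst (ch (st k))) (fst (st k)), snd (ch (st k)))" for k
    unfolding st_def by simp
  have chP: "fst (ch pM) \<in> snd pM \<and> snd (ch pM) \<subseteq> snd pM \<and> infinite (snd (ch pM)) \<and>
     (\<forall>y\<in>snd (ch pM). fst (ch pM) < y) \<and> I (insert (fst (ch pM)) (fst pM)) (snd (ch pM))"
    if a: "I (fst pM) (snd pM)" "infinite (snd pM)" for pM
  proof -
    obtain x N where "x \<in> snd pM \<and> N \<subseteq> snd pM \<and> infinite N \<and> (\<forall>y\<in>N. x < y) \<and> I (insert x (fst pM)) N"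
      using step[OF a] by blast
    then have "\<exists>xN. fst xN \<in> snd pM \<and> snd xN \<subseteq> snd pM \<and> infinite (snd xN) \<and>
     (\<forall>y\<in>snd xN. fst xN < y) \<and> I (insert (fst xN) (fst pM)) (snd xN)"
      by (intro exI[of _ "(x,N)"]) simp
    then show ?thesis unfolding ch_def by (rule someI_ex)
  qed
  define xs where "xs = (\<lambda>k. fst (ch (st k)))"
  define Ms where "Ms = (\<lambda>k. snd (st k))"
  have inv: "I (fst (st k)) (snd (st k)) \<and> infinite (snd (st k)) \<and> fst (st k) = p0 \<union> xs ` {..<k}" for k
  proof (induction k)
    case 0 then show ?case using st0 assms(1,2) by simp
  next
    case (Suc k)
    then show ?case using chP[of "st k"] stS[of k] unfolding xs_def by (auto simp: lessThan_Suc)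
  qed
  show ?thesis
  proof (intro exI conjI allI)
    show "Ms 0 = M0" unfolding Ms_def st0 by simp
    fix k
    show "xs k \<in> Ms k" "Ms (Suc k) \<subseteq> Ms k" "infinite (Ms k)" "\<forall>y\<in>Ms (Suc k). xs k < y"
      "I (p0 \<union> xs ` {..<k}) (Ms k)"
      using inv[of k] chP[of "st k"] stS[of k] unfolding xs_def Ms_def by auto
  qed
qed

lemma fusion_props:
  assumes "\<forall>k. xs k \<in> Ms k \<and> Ms (Suc k) \<subseteq> Ms k \<and> (\<forall>y\<in>Ms (Suc k). xs k < y)"
  shows "strict_mono xs" "\<And>k j. k \<le> j \<Longrightarrow> xs j \<in> Ms k" "\<And>k j. k \<le> j \<Longrightarrow> Ms j \<subseteq> Ms k"
proof -
  show mono: "Ms j \<subseteq> Ms k" if "k \<le> j" for k j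
    using that
  proof (induction j)
    case 0 then show ?case by simp
  next
    case (Suc j)
    show ?case
    proof (cases "k = Suc j")
      case False
      then have "Ms j \<subseteq> Ms k" using Suc by simp
      then show ?thesis using assms by blast
    qed simp
  qed
  show "xs j \<in> Ms k" if "k \<le> j" for k j using mono[OF that] assms by blast
  show "strict_mono xs"
    unfolding strict_mono_Suc_iff using assms by blast
qed

lemma fin_subset_range:
  assumes "strict_mono (xs :: nat \<Rightarrow> nat)" "finite s" "s \<subseteq> range xs"
  shows "\<exists>k. s \<subseteq> xs ` {..<k}"
proof -
  obtain K where "finite K" "s = xs ` K" using assms(2,3) by (meson finite_subset_image)
  then have "K \<subseteq> {..<Suc (Max (insert 0 K))}"
    using Max_ge[of "insert 0 K"] by (auto simp: less_Suc_eq_le)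
  then show ?thesis using \<open>s = xs ` K\<close> by blast
qed

section \<open>Nash-Williams\<close>

definition acc :: "nat set set \<Rightarrow> nat set \<Rightarrow> nat set \<Rightarrow> bool" where
  "acc F M s \<longleftrightarrow> (\<forall>L. L \<subseteq> M \<longrightarrow> infinite L \<longrightarrow> (\<exists>u. finite u \<and> init_seg u L \<and> s \<union> u \<in> F))"

definition rej :: "nat set set \<Rightarrow> nat set \<Rightarrow> nat set \<Rightarrow> bool" where
  "rej F M s \<longleftrightarrow> (\<forall>N. N \<subseteq> M \<longrightarrow> infinite N \<longrightarrow> \<not> acc F N s)"

lemma acc_mono: "acc F M s \<Longrightarrow> N \<subseteq> M \<Longrightarrow> acc F N s"
  unfolding acc_def by (meson order_trans)

lemma rej_mono: "rej F M s \<Longrightarrow> N \<subseteq> M \<Longrightarrow> rej F N s"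
  unfolding rej_def by (meson order_trans)

lemma in_F_acc: "s \<in> F \<Longrightarrow> acc F M s"
  unfolding acc_def init_seg_def by (intro allI impI exI[of _ "{}"]) simp

lemma rej_notin: "rej F M s \<Longrightarrow> infinite M \<Longrightarrow> s \<notin> F"
  unfolding rej_def using in_F_acc by blast

lemma key_lemma:
  assumes "infinite M" "rej F M s"
  shows "\<exists>N\<subseteq>M. infinite N \<and> (\<forall>n\<in>N. rej F {y\<in>N. n<y} (insert n s))"
proof -
  define I where "I = (\<lambda>p M'. M' \<subseteq> M \<and> (\<forall>x\<in>p. acc F M' (insert x s) \<or> rej F M' (insert x s)))"
  have "\<exists>x N. x \<in> M' \<and> N \<subseteq> M' \<and> infinite N \<and> (\<forall>y\<in>N. x < y) \<and> I (insert x p) N"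
    if "I p M'" "infinite M'" for p M'
  proof -
    define x where "x = mn M'"
    have "M' \<noteq> {}" using that(2) by auto
    then have "x \<in> M'" unfolding x_def by (rule mn(1))
    define T where "T = {y\<in>M'. x<y}"
    have "infinite T" unfolding T_def using infinite_tail that(2) by blast
    obtain N where N: "N \<subseteq> T" "infinite N" "acc F N (insert x s) \<or> rej F N (insert x s)"
    proof (cases "\<exists>N\<subseteq>T. infinite N \<and> acc F N (insert x s)")
      case True then show ?thesis using that by blast
    next
      case False
      then have "rej F T (insert x s)" unfolding rej_def by blast
      then show ?thesis using that \<open>infinite T\<close> by blast
    qed
    have NM: "N \<subseteq> M'" using N(1) unfolding T_def by auto
    have "I (insert x p) N"
      unfolding I_def
    proof (intro conjI ballI)
      show "N \<subseteq> M" using NM that(1) unfolding I_def by auto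
      fix z assume "z \<in> insert x p"
      then show "acc F N (insert z s) \<or> rej F N (insert z s)"
      proof
        assume "z = x" then show ?thesis using N(3) by simp
      next
        assume "z \<in> p"
        then have "acc F M' (insert z s) \<or> rej F M' (insert z s)" using that(1) unfolding I_def by blast
        then show ?thesis using NM acc_mono rej_mono by blast
      qed
    qed
    moreover have "\<forall>y\<in>N. x < y" using N(1) unfolding T_def by auto
    ultimately show ?thesis using NM N(2) \<open>x \<in> M'\<close> by blast
  qed
  then obtain xs Ms where F: "Ms 0 = M" "\<forall>k. xs k \<in> Ms k \<and> Ms (Suc k) \<subseteq> Ms k \<and> infinite (Ms k) \<and>
      (\<forall>y\<in>Ms (Suc k). xs k < y) \<and> I ({} \<union> xs ` {..<k}) (Ms k)"
    using fusion[of I "{}" M] assms(1) unfolding I_def by blast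
  note fp = fusion_props[of xs Ms]
  have sm: "strict_mono xs" using fp F by blast
  define Ns where "Ns = range xs"
  have NsM: "Ns \<subseteq> M" unfolding Ns_def using fp(2)[of 0] F by auto
  have tailsub: "{y\<in>Ns. xs k < y} \<subseteq> Ms (Suc k)" for k
  proof
    fix y assume "y \<in> {y\<in>Ns. xs k < y}"
    then obtain j where "y = xs j" "xs k < xs j" unfolding Ns_def by auto
    then have "Suc k \<le> j" using strict_mono_less[OF sm] by simp
    then show "y \<in> Ms (Suc k)" using fp(2) F \<open>y = xs j\<close> by blast
  qed
  have dec: "acc F {y\<in>Ns. xs k < y} (insert (xs k) s) \<or> rej F {y\<in>Ns. xs k < y} (insert (xs k) s)" for k
  proof -
    have "I (xs ` {..<Suc k}) (Ms (Suc k))" using F by simp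
    then have "acc F (Ms (Suc k)) (insert (xs k) s) \<or> rej F (Ms (Suc k)) (insert (xs k) s)"
      unfolding I_def by auto
    then show ?thesis using tailsub[of k] acc_mono rej_mono by blast
  qed
  define K where "K = {k. acc F {y\<in>Ns. xs k < y} (insert (xs k) s)}"
  have "finite K"
  proof (rule ccontr)
    assume "infinite K"
    define N' where "N' = xs ` K"
    have infN': "infinite N'" unfolding N'_def using \<open>infinite K\<close> sm
      by (simp add: finite_image_iff strict_mono_imp_inj_on)
    have "acc F N' s" unfolding acc_def
    proof (intro allI impI)
      fix L assume L: "L \<subseteq> N'" "infinite L"
      define n where "n = mn L"
      have "L \<noteq> {}" using L(2) by auto
      then have "n \<in> L" unfolding n_def by (rule mn(1))
      then obtain k where "k \<in> K" "n = xs k" using L unfolding N'_def by blast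
      have "L - {n} \<subseteq> {y\<in>Ns. xs k < y}"
      proof
        fix y assume y: "y \<in> L - {n}"
        then have "n \<le> y" unfolding n_def using mn(2) by blast
        then have "xs k < y" using y \<open>n = xs k\<close> by auto
        moreover have "y \<in> Ns" using y L(1) unfolding N'_def Ns_def by auto
        ultimately show "y \<in> {y\<in>Ns. xs k < y}" by simp
      qed
      moreover have "infinite (L - {n})" using L(2) by simp
      ultimately obtain u' where u': "finite u'" "init_seg u' (L - {n})" "insert (xs k) s \<union> u' \<in> F"
        using \<open>k \<in> K\<close> unfolding K_def acc_def by blast
      have "init_seg (insert n u') L"
        unfolding init_seg_def
      proof (intro conjI ballI impI)
        show "insert n u' \<subseteq> L" using u'(2) \<open>n \<in> L\<close> unfolding init_seg_def by auto
        fix z y assume z: "z \<in> insert n u'" and y: "y \<in> L" "y < z"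
        show "y \<in> insert n u'"
        proof (cases "y = n")
          case False
          have "n \<le> y" unfolding n_def using mn(2) y(1) by blast
          then have "z \<noteq> n" using y(2) by auto
          then have "z \<in> u'" using z by simp
          then show ?thesis using u'(2) y False unfolding init_seg_def by blast
        qed simp
      qed
      then show "\<exists>u. finite u \<and> init_seg u L \<and> s \<union> u \<in> F"
        using u' \<open>n = xs k\<close> by (intro exI[of _ "insert n u'"]) auto
    qed
    moreover have "N' \<subseteq> M" using NsM unfolding N'_def Ns_def by auto
    ultimately show False using assms(2) infN' unfolding rej_def by blast
  qed
  define N'' where "N'' = xs ` (- K)"
  have infN'': "infinite N''" unfolding N''_def using \<open>finite K\<close> sm
    by (simp add: finite_image_iff strict_mono_imp_inj_on Compl_eq_Diff_UNIV infinite_UNIV_nat)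
  show ?thesis
  proof (intro exI[of _ N''] conjI ballI)
    show "N'' \<subseteq> M" using NsM unfolding N''_def Ns_def by auto
    show "infinite N''" by (rule infN'')
    fix n assume "n \<in> N''"
    then obtain k where "k \<notin> K" "n = xs k" unfolding N''_def by auto
    then have "rej F {y\<in>Ns. xs k < y} (insert (xs k) s)" using dec K_def by blast
    moreover have "{y\<in>N''. n<y} \<subseteq> {y\<in>Ns. xs k < y}" using \<open>n = xs k\<close> unfolding N''_def Ns_def by auto
    ultimately show "rej F {y\<in>N''. n<y} (insert n s)" using rej_mono \<open>n = xs k\<close> by blast
  qed
qed

lemma key_lemma_multi:
  assumes "finite S"
  shows "infinite M \<Longrightarrow> (\<forall>s\<in>S. rej F M s) \<Longrightarrow> \<exists>N\<subseteq>M. infinite N \<and> (\<forall>n\<in>N. \<forall>s\<in>S. rej F {y\<in>N. n<y} (insert n s))"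
  using assms
proof (induction S arbitrary: M rule: finite_induct)
  case empty then show ?case by (intro exI[of _ M]) simp
next
  case (insert s S)
  have "\<forall>s\<in>S. rej F M s" using insert.prems by simp
  from insert.IH[OF insert.prems(1) this]
  obtain N1 where N1: "N1 \<subseteq> M" "infinite N1" "\<forall>n\<in>N1. \<forall>s\<in>S. rej F {y\<in>N1. n<y} (insert n s)"
    by blast
  have "rej F N1 s" using insert.prems(2) N1(1) rej_mono by blast
  from key_lemma[OF N1(2) this]
  obtain N2 where N2: "N2 \<subseteq> N1" "infinite N2" "\<forall>n\<in>N2. rej F {y\<in>N2. n<y} (insert n s)"
    by blast
  have "\<forall>n\<in>N2. \<forall>s\<in>S. rej F {y\<in>N2. n<y} (insert n s)"
  proof (intro ballI)
    fix n s assume "n \<in> N2" "s \<in> S"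
    then have "rej F {y\<in>N1. n<y} (insert n s)" using N1(3) N2(1) by blast
    moreover have "{y\<in>N2. n<y} \<subseteq> {y\<in>N1. n<y}" using N2(1) by auto
    ultimately show "rej F {y\<in>N2. n<y} (insert n s)" by (rule rej_mono)
  qed
  then have "\<forall>n\<in>N2. \<forall>s'\<in>insert s S. rej F {y\<in>N2. n<y} (insert n s')" using N2(3) by simp
  moreover have "N2 \<subseteq> M" using N1(1) N2(1) by simp
  ultimately show ?case using N2(2) by blast
qed

theorem nash_williams:
  assumes "infinite M"
  shows "\<exists>N\<subseteq>M. infinite N \<and> ((\<forall>s. finite s \<longrightarrow> s \<subseteq> N \<longrightarrow> s \<notin> F) \<or>
           (\<forall>L. L \<subseteq> N \<longrightarrow> infinite L \<longrightarrow> (\<exists>u. finite u \<and> init_seg u L \<and> u \<in> F)))"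
proof (cases "\<exists>N\<subseteq>M. infinite N \<and> acc F N {}")
  case True
  then obtain N where N: "N \<subseteq> M" "infinite N" "acc F N {}" by blast
  have "\<forall>L. L \<subseteq> N \<longrightarrow> infinite L \<longrightarrow> (\<exists>u. finite u \<and> init_seg u L \<and> u \<in> F)"
    using N(3) unfolding acc_def by simp
  then show ?thesis using N(1,2) by blast
next
  case False
  then have r0: "rej F M {}" unfolding rej_def by blast
  define I where "I = (\<lambda>p M'. finite p \<and> M' \<subseteq> M \<and> (\<forall>s. s \<subseteq> p \<longrightarrow> rej F M' s))"
  have stp: "\<exists>x N. x \<in> M' \<and> N \<subseteq> M' \<and> infinite N \<and> (\<forall>y\<in>N. x < y) \<and> I (insert x p) N"
    if a: "I p M'" "infinite M'" for p M'
  proof -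
    have fp: "finite (Pow p)" using a(1) unfolding I_def by simp
    have rp: "\<forall>s\<in>Pow p. rej F M' s" using a(1) unfolding I_def by blast
    from key_lemma_multi[OF fp a(2) rp]
    obtain N where N: "N \<subseteq> M'" "infinite N" "\<forall>n\<in>N. \<forall>s\<in>Pow p. rej F {y\<in>N. n<y} (insert n s)"
      by blast
    define x where "x = mn N"
    have "N \<noteq> {}" using N(2) by auto
    then have "x \<in> N" unfolding x_def by (rule mn(1))
    define T where "T = {y\<in>N. x<y}"
    have "infinite T" unfolding T_def using infinite_tail N(2) by blast
    have "I (insert x p) T"
      unfolding I_def
    proof (intro conjI allI impI)
      show "finite (insert x p)" using a(1) unfolding I_def by simp
      show "T \<subseteq> M" using N(1) a(1) unfolding I_def T_def by auto
      fix s assume s: "s \<subseteq> insert x p"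
      show "rej F T s"
      proof (cases "x \<in> s")
        case True
        then have e: "insert x (s - {x}) = s" by auto
        have "s - {x} \<in> Pow p" using s by auto
        then have "rej F {y\<in>N. x<y} (insert x (s - {x}))" using N(3) \<open>x \<in> N\<close> by blast
        then show ?thesis unfolding T_def e .
      next
        case False
        then have "s \<subseteq> p" using s by auto
        then have "rej F M' s" using a(1) unfolding I_def by blast
        moreover have "T \<subseteq> M'" using N(1) unfolding T_def by auto
        ultimately show ?thesis using rej_mono by blast
      qed
    qed
    moreover have "T \<subseteq> M'" using N(1) unfolding T_def by auto
    moreover have "\<forall>y\<in>T. x < y" unfolding T_def by auto
    moreover have "x \<in> M'" using \<open>x \<in> N\<close> N(1) by auto
    ultimately show ?thesis using \<open>infinite T\<close> by blast
  qed
  have "I {} M" unfolding I_def using r0 by auto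
  from fusion[of I "{}" M, OF this assms stp]
  obtain xs Ms where F: "Ms 0 = M" "\<forall>k. xs k \<in> Ms k \<and> Ms (Suc k) \<subseteq> Ms k \<and> infinite (Ms k) \<and>
      (\<forall>y\<in>Ms (Suc k). xs k < y) \<and> I ({} \<union> xs ` {..<k}) (Ms k)"
    by blast
  have F2: "\<forall>k. xs k \<in> Ms k \<and> Ms (Suc k) \<subseteq> Ms k \<and> (\<forall>y\<in>Ms (Suc k). xs k < y)" using F(2) by blast
  note fp = fusion_props[OF F2]
  have sm: "strict_mono xs" using fp(1) .
  show ?thesis
  proof (intro exI[of _ "range xs"] conjI disjI1 allI impI)
    show "range xs \<subseteq> M" using fp(2)[of 0] F(1) by auto
    show "infinite (range xs)" using sm
      by (simp add: finite_image_iff strict_mono_imp_inj_on infinite_UNIV_nat)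
    fix s assume "finite s" "s \<subseteq> range xs"
    then obtain k where "s \<subseteq> xs ` {..<k}" using fin_subset_range sm by blast
    moreover have "I ({} \<union> xs ` {..<k}) (Ms k)" using F(2) by blast
    ultimately have "rej F (Ms k) s" unfolding I_def by auto
    moreover have "infinite (Ms k)" using F(2) by blast
    ultimately show "s \<notin> F" using rej_notin by blast
  qed
qed



definition Up :: "'a set \<Rightarrow> 'a rel \<Rightarrow> 'a \<Rightarrow> 'a set" where
  "Up A r x = {w\<in>A. (x, w) \<in> r \<and> x \<noteq> w}"

definition Kset :: "'a set \<Rightarrow> 'a rel \<Rightarrow> 'a \<Rightarrow> 'a set" where
  "Kset A r x = {y\<in>A. y \<notin> Up A r x \<and> Up A r y \<subseteq> Up A r x}"

lemma io_char:
  fixes C :: "'c::linorder set"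
  assumes "interval_order_in A r C"
  obtains I :: "'a \<Rightarrow> 'c set" where "\<forall>x\<in>A. \<forall>y\<in>A. (x, y) \<in> r \<longleftrightarrow> x = y \<or> (\<forall>u\<in>I x. \<forall>v\<in>I y. u < v)"
  using assms unfolding interval_order_in_def by blast

lemma Up_chain:
  fixes C :: "'c::linorder set"
  assumes io: "interval_order_in A r C" and xA: "x \<in> A" and yA: "y \<in> A"
  shows "Up A r x \<subseteq> Up A r y \<or> Up A r y \<subseteq> Up A r x"
proof (rule ccontr)
  assume "\<not> ?thesis"
  then have n1: "\<not> Up A r x \<subseteq> Up A r y" and n2: "\<not> Up A r y \<subseteq> Up A r x" by auto
  from n1 obtain z where z: "z \<in> Up A r x" "z \<notin> Up A r y" by blast
  from n2 obtain w where w: "w \<in> Up A r y" "w \<notin> Up A r x" by blast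
  have po: "partial_order_on A r" using io unfolding interval_order_in_def by blast
  then have tr: "trans r" and an: "antisym r" unfolding partial_order_on_def preorder_on_def by auto
  obtain I :: "'a \<Rightarrow> 'c set" where I: "\<forall>p\<in>A. \<forall>q\<in>A. (p, q) \<in> r \<longleftrightarrow> p = q \<or> (\<forall>u\<in>I p. \<forall>v\<in>I q. u < v)"
    using io_char[OF io] by blast
  have zA: "z \<in> A" "(x, z) \<in> r" "x \<noteq> z" using z unfolding Up_def by auto
  have wA: "w \<in> A" "(y, w) \<in> r" "y \<noteq> w" using w unfolding Up_def by auto
  have "y \<noteq> z"
  proof
    assume "y = z"
    then have "(x, w) \<in> r" using zA wA tr unfolding trans_def by blast
    moreover have "x \<noteq> w" using \<open>y = z\<close> zA wA an unfolding antisym_def by blast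
    ultimately show False using w wA unfolding Up_def by blast
  qed
  have "x \<noteq> w"
  proof
    assume "x = w"
    then have "(y, z) \<in> r" using zA wA tr unfolding trans_def by blast
    moreover have "y \<noteq> z" by fact
    ultimately show False using z zA unfolding Up_def by blast
  qed
  have yz: "(y, z) \<notin> r" using z zA \<open>y \<noteq> z\<close> unfolding Up_def by blast
  have xw: "(x, w) \<notin> r" using w wA \<open>x \<noteq> w\<close> unfolding Up_def by blast
  have Ixz: "(x, z) \<in> r \<longleftrightarrow> x = z \<or> (\<forall>u\<in>I x. \<forall>v\<in>I z. u < v)" using I xA zA(1) by blast
  have Iyw: "(y, w) \<in> r \<longleftrightarrow> y = w \<or> (\<forall>u\<in>I y. \<forall>v\<in>I w. u < v)" using I yA wA(1) by blast
  have Iyz: "(y, z) \<in> r \<longleftrightarrow> y = z \<or> (\<forall>u\<in>I y. \<forall>v\<in>I z. u < v)" using I yA zA(1) by blast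
  have Ixw: "(x, w) \<in> r \<longleftrightarrow> x = w \<or> (\<forall>u\<in>I x. \<forall>v\<in>I w. u < v)" using I xA wA(1) by blast
  have 1: "\<forall>u\<in>I x. \<forall>v\<in>I z. u < v" using Ixz zA by simp
  have 2: "\<forall>u\<in>I y. \<forall>v\<in>I w. u < v" using Iyw wA by simp
  have "\<not> (\<forall>u\<in>I y. \<forall>v\<in>I z. u < v)" using Iyz yz by simp
  then obtain u1 v1 where uv1: "u1 \<in> I y" "v1 \<in> I z" "\<not> u1 < v1" by blast
  have "\<not> (\<forall>u\<in>I x. \<forall>v\<in>I w. u < v)" using Ixw xw by simp
  then obtain u2 v2 where uv2: "u2 \<in> I x" "v2 \<in> I w" "\<not> u2 < v2" by blast
  have "u1 < v2" using 2 uv1(1) uv2(2) by blast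
  moreover have "u2 < v1" using 1 uv2(1) uv1(2) by blast
  moreover have "v1 \<le> u1" using uv1(3) by (simp add: not_less)
  moreover have "v2 \<le> u2" using uv2(3) by (simp add: not_less)
  ultimately have "v1 < v1"
    using order.strict_trans1[of v1 u1 v2] order.strict_trans2[of v1 v2 u2] order.strict_trans[of v1 u2 v1] by blast
  then show False by simp
qed

lemma wqo_good_seq:
  fixes g :: "nat \<Rightarrow> 'a"
  assumes wq: "wqo_on A r" and an: "antisym r" and g: "\<And>i. g i \<in> A"
  shows "\<exists>i j. i < j \<and> (g i, g j) \<in> r"
proof -
  have pre: "preorder_on A r" and wf: "wf (strict_part A r)"
    and ac: "\<And>S. antichain_on A r S \<Longrightarrow> finite S" using wq unfolding wqo_on_def by auto
  have tr: "trans r" and rf: "\<And>x. x \<in> A \<Longrightarrow> (x, x) \<in> r"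
    using pre unfolding preorder_on_def refl_on_def by auto
  define Z where "Z = range g"
  define Mins where "Mins = {m\<in>Z. \<forall>z\<in>Z. (z, m) \<notin> strict_part A r}"
  have "antichain_on A r Mins"
    unfolding antichain_on_def
  proof (intro conjI)
    show "Mins \<subseteq> A" unfolding Mins_def Z_def using g by auto
  next
    show "\<forall>m1\<in>Mins. \<forall>m2\<in>Mins. m1 \<noteq> m2 \<longrightarrow> (m1, m2) \<notin> r \<and> (m2, m1) \<notin> r"
    proof (intro ballI impI)
    fix m1 m2 assume m: "m1 \<in> Mins" "m2 \<in> Mins" "m1 \<noteq> m2"
    have A: "m1 \<in> A" "m2 \<in> A" using m unfolding Mins_def Z_def using g by auto
    show "(m1, m2) \<notin> r \<and> (m2, m1) \<notin> r"
    proof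
      show "(m1, m2) \<notin> r"
      proof
        assume "(m1, m2) \<in> r"
        moreover have "(m1, m2) \<notin> strict_part A r" using m unfolding Mins_def by blast
        ultimately have "(m2, m1) \<in> r" using A unfolding strict_part_def by blast
        then show False using \<open>(m1, m2) \<in> r\<close> an m(3) unfolding antisym_def by blast
      qed
      show "(m2, m1) \<notin> r"
      proof
        assume "(m2, m1) \<in> r"
        moreover have "(m2, m1) \<notin> strict_part A r" using m unfolding Mins_def by blast
        ultimately have "(m1, m2) \<in> r" using A unfolding strict_part_def by blast
        then show False using \<open>(m2, m1) \<in> r\<close> an m(3) unfolding antisym_def by blast
      qed
    qed
    qed
  qed
  then have finM: "finite Mins" by (rule ac)
  have below: "\<exists>m\<in>Mins. (m, z) \<in> r" if "z \<in> Z" for z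
  proof -
    define Q where "Q = {w\<in>Z. (w, z) \<in> r}"
    have "z \<in> Q" unfolding Q_def using that g rf unfolding Z_def by auto
    then obtain m where m: "m \<in> Q" "\<And>y. (y, m) \<in> strict_part A r \<Longrightarrow> y \<notin> Q"
      using wf_eq_minimal[THEN iffD1, OF wf, rule_format, OF \<open>z \<in> Q\<close>] by blast
    have "m \<in> Mins"
      unfolding Mins_def
    proof (intro CollectI conjI ballI)
      show "m \<in> Z" using m(1) unfolding Q_def by simp
      fix w assume "w \<in> Z"
      show "(w, m) \<notin> strict_part A r"
      proof
        assume "(w, m) \<in> strict_part A r"
        then have "(w, z) \<in> r" using m(1) tr unfolding Q_def strict_part_def trans_def by blast
        then have "w \<in> Q" using \<open>w \<in> Z\<close> unfolding Q_def by simp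
        then show False using m(2) \<open>(w, m) \<in> strict_part A r\<close> by blast
      qed
    qed
    then show ?thesis using m(1) unfolding Q_def by blast
  qed
  have U: "UNIV \<subseteq> (\<Union>m\<in>Mins. {i. (m, g i) \<in> r})"
  proof
    fix i :: nat
    have "g i \<in> Z" unfolding Z_def by simp
    then obtain m where "m \<in> Mins" "(m, g i) \<in> r" using below by blast
    then show "i \<in> (\<Union>m\<in>Mins. {i. (m, g i) \<in> r})" by blast
  qed
  have "\<exists>m\<in>Mins. infinite {i. (m, g i) \<in> r}"
  proof (rule ccontr)
    assume "\<not> ?thesis"
    then have "finite (\<Union>m\<in>Mins. {i. (m, g i) \<in> r})" using finM by blast
    then have "finite (UNIV :: nat set)" using U finite_subset by blast
    then show False by simp
  qed
  then obtain m where "m \<in> Mins" "infinite {i. (m, g i) \<in> r}" by blast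
  then obtain i0 where "m = g i0" unfolding Mins_def Z_def by auto
  obtain j where "j \<in> {i. (m, g i) \<in> r}" "i0 < j"
    using \<open>infinite {i. (m, g i) \<in> r}\<close> unfolding infinite_nat_iff_unbounded by blast
  then show ?thesis using \<open>m = g i0\<close> by blast
qed

lemma Up_no_ascending:
  fixes C :: "'c::linorder set" and x :: "nat \<Rightarrow> 'a"
  assumes io: "interval_order_in A r C" and wq: "wqo_on A r"
    and x: "\<And>i. x i \<in> A" and asc: "\<And>i. Up A r (x i) \<subset> Up A r (x (Suc i))"
  shows False
proof -
  have po: "partial_order_on A r" using io unfolding interval_order_in_def by blast
  then have tr: "trans r" and an: "antisym r" unfolding partial_order_on_def preorder_on_def by auto
  have mono: "Up A r (x a) \<subseteq> Up A r (x b)" if "a \<le> b" for a b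
    using that
  proof (induction b)
    case 0 then show ?case by simp
  next
    case (Suc b)
    show ?case
    proof (cases "a = Suc b")
      case False
      then have "Up A r (x a) \<subseteq> Up A r (x b)" using Suc by simp
      then show ?thesis using asc[of b] by blast
    qed simp
  qed
  have "\<forall>i. \<exists>z. z \<in> Up A r (x (Suc i)) \<and> z \<notin> Up A r (x i)" using asc by blast
  then obtain z where z: "\<And>i. z i \<in> Up A r (x (Suc i))" "\<And>i. z i \<notin> Up A r (x i)" by metis
  have zA: "\<And>i. z i \<in> A" using z(1) unfolding Up_def by blast
  have bad: "(z i, z j) \<notin> r" if "i < j" for i j
  proof
    assume zij: "(z i, z j) \<in> r"
    have "z i \<in> Up A r (x j)" using z(1)[of i] mono[of "Suc i" j] that by auto
    then have xz: "(x j, z i) \<in> r" "x j \<noteq> z i" unfolding Up_def by auto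
    have "(x j, z j) \<in> r" using xz zij tr unfolding trans_def by blast
    moreover have "x j \<noteq> z j"
    proof
      assume "x j = z j"
      then have "z i = x j" using xz zij an unfolding antisym_def by auto
      then show False using xz by simp
    qed
    ultimately have "z j \<in> Up A r (x j)" using zA unfolding Up_def by blast
    then show False using z(2) by blast
  qed
  show False using wqo_good_seq[OF wq an zA] bad by blast
qed

lemma Kset_finite:
  fixes C :: "'c::linorder set"
  assumes io: "interval_order_in A r C" and wq: "wqo_on A r"
  shows "finite (Kset A r x)"
proof -
  have "antichain_on A r (Kset A r x)"
    unfolding antichain_on_def
  proof (intro conjI)
    show "Kset A r x \<subseteq> A" unfolding Kset_def by auto
  next
    show "\<forall>y1\<in>Kset A r x. \<forall>y2\<in>Kset A r x. y1 \<noteq> y2 \<longrightarrow> (y1, y2) \<notin> r \<and> (y2, y1) \<notin> r"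
    proof (intro ballI impI)
    fix y1 y2 assume y: "y1 \<in> Kset A r x" "y2 \<in> Kset A r x" "y1 \<noteq> y2"
    have "(y1, y2) \<notin> r" if "y1 \<in> Kset A r x" "y2 \<in> Kset A r x" "y1 \<noteq> y2" for y1 y2
    proof
      assume "(y1, y2) \<in> r"
      then have "y2 \<in> Up A r y1" using that unfolding Up_def Kset_def by auto
      then show False using that unfolding Kset_def by auto
    qed
    then show "(y1, y2) \<notin> r \<and> (y2, y1) \<notin> r" using y by metis
  qed
  qed
  then show ?thesis using wq unfolding wqo_on_def by blast
qed



lemma union_barrier_infinite:
  assumes "barrier B" shows "infinite (\<Union>B)"
proof
  assume "finite (\<Union>B)"
  then have "finite (Pow (\<Union>B))" by simp
  moreover have "B \<subseteq> Pow (\<Union>B)" by blast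
  ultimately have "finite B" by (rule finite_subset[rotated])
  then show False using assms unfolding barrier_def by blast
qed

lemma init_seg_insert_min:
  assumes "init_seg u L" "\<forall>y\<in>L. x < y" shows "init_seg (insert x u) (insert x L)"
  unfolding init_seg_def
proof (intro conjI ballI impI)
  show "insert x u \<subseteq> insert x L" using assms(1) unfolding init_seg_def by blast
  fix z y assume z: "z \<in> insert x u" and y: "y \<in> insert x L" "y < z"
  show "y \<in> insert x u"
  proof (cases "y = x")
    case False
    then have "y \<in> L" using y(1) by simp
    then have "x < y" using assms(2) by blast
    then have "z \<noteq> x" using y(2) by simp
    then have "z \<in> u" using z by simp
    then show ?thesis using assms(1) \<open>y \<in> L\<close> y(2) unfolding init_seg_def by blast
  qed simp
qed

lemma init_seg_tail:
  assumes "finite t" "t \<subseteq> N"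
  shows "init_seg t (t \<union> {y\<in>N. Max t < y})"
  unfolding init_seg_def
proof (intro conjI ballI impI)
  show "t \<subseteq> t \<union> {y\<in>N. Max t < y}" by blast
  fix z y assume z: "z \<in> t" and y: "y \<in> t \<union> {y\<in>N. Max t < y}" "y < z"
  have "z \<le> Max t" using Max_ge[OF assms(1) z] .
  then show "y \<in> t" using y by auto
qed

lemma Min_insert_less:
  assumes "finite t" "\<forall>y\<in>t. x < y" shows "Min (insert x t) = x"
  using Min_insert2[OF assms(1)] assms(2) by (simp add: less_imp_le)

lemma shift_insert:
  assumes "finite t" "\<forall>y\<in>t. x < y" "init_seg u t" "u \<noteq> t"
  shows "insert x u \<lhd> t"
  unfolding shift_rel_def
proof (intro exI[of _ "insert x t"] conjI)
  show "finite (insert x t)" using assms(1) by simp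
  show "init_seg (insert x u) (insert x t)" using init_seg_insert_min[OF assms(3,2)] .
  have "x \<notin> t" using assms(2) by blast
  moreover have "u \<subseteq> t" using assms(3) unfolding init_seg_def by blast
  ultimately show "insert x u \<noteq> insert x t" using assms(4) insert_ident[of x u t] by blast
  show "t = insert x t - {Min (insert x t)}" using Min_insert_less[OF assms(1,2)] \<open>x \<notin> t\<close> by simp
qed

lemma proper_T:
  assumes B: "barrier B" and w: "w \<in> B" "u \<subset> w" and u: "init_seg u L"
    and L: "L \<subseteq> \<Union>B" "infinite L"
  shows "init_seg u (binit B L)" "u \<noteq> binit B L"
proof -
  let ?t = "binit B L"
  have t: "?t \<in> B" "init_seg ?t L" using binit[OF B L] by auto
  have nt: "\<not> ?t \<subseteq> u"
  proof
    assume "?t \<subseteq> u"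
    then have "?t \<subseteq> w" using w(2) by blast
    then have "?t = w" using barrier_antichain[OF B t(1) w(1)] by blast
    then show False using \<open>?t \<subseteq> u\<close> w(2) by blast
  qed
  then have "u \<subseteq> ?t" using init_seg_comp[OF u t(2)] by blast
  then show "init_seg u ?t" using u t(2) unfolding init_seg_def by blast
  show "u \<noteq> ?t" using nt by blast
qed

lemma pred_shift:
  assumes B: "barrier B" and L: "L \<subseteq> \<Union>B" "infinite L" and x: "x \<in> \<Union>B" "\<forall>y\<in>L. x < y"
  shows "binit B (insert x L) \<lhd> binit B L"
    "init_seg (binit B (insert x L)) (insert x (binit B L))"
proof -
  let ?t = "binit B L" and ?s = "binit B (insert x L)"
  have L': "insert x L \<subseteq> \<Union>B" "infinite (insert x L)" using L x by auto
  have s: "?s \<in> B" "init_seg ?s (insert x L)" using binit[OF B L'] by auto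
  have t: "?t \<in> B" "init_seg ?t L" "finite ?t" using binit[OF B L] by auto
  have xt: "\<forall>y\<in>?t. x < y" using t(2) x(2) unfolding init_seg_def by blast
  have it: "init_seg (insert x ?t) (insert x L)" using init_seg_insert_min[OF t(2) x(2)] .
  have n: "\<not> insert x ?t \<subseteq> ?s"
  proof
    assume a: "insert x ?t \<subseteq> ?s"
    then have "?t \<subseteq> ?s" by blast
    then have "?t = ?s" using barrier_antichain[OF B t(1) s(1)] by blast
    moreover have "x \<in> ?s" "x \<notin> ?t" using a xt by auto
    ultimately show False by simp
  qed
  then have sub: "?s \<subseteq> insert x ?t" using init_seg_comp[OF s(2) it] by blast
  show is2: "init_seg ?s (insert x ?t)" using sub s(2) it unfolding init_seg_def by blast
  show "?s \<lhd> ?t"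
    unfolding shift_rel_def
  proof (intro exI[of _ "insert x ?t"] conjI)
    show "finite (insert x ?t)" using t(3) by simp
    show "init_seg ?s (insert x ?t)" by (rule is2)
    show "?s \<noteq> insert x ?t" using n by blast
    have "x \<notin> ?t" using xt by blast
    then show "?t = insert x ?t - {Min (insert x ?t)}" using Min_insert_less[OF t(3) xt] by simp
  qed
qed

lemma mn_inf: assumes "infinite (L::nat set)" shows "mn L \<in> L" "\<forall>y\<in>L - {mn L}. mn L < y"
proof -
  have "L \<noteq> {}" using assms by auto
  then show "mn L \<in> L" by (rule mn(1))
  show "\<forall>y\<in>L - {mn L}. mn L < y" using mn(2) by (metis DiffE le_neq_implies_less singletonI)
qed

lemma shift_binit:
  assumes B: "barrier B" and L: "L \<subseteq> \<Union>B" "infinite L"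
  shows "binit B L \<lhd> binit B (L - {mn L})"
proof -
  have m: "mn L \<in> L" "\<forall>y\<in>L - {mn L}. mn L < y" using mn_inf[OF L(2)] by auto
  have e: "insert (mn L) (L - {mn L}) = L" using m(1) by blast
  have L1: "L - {mn L} \<subseteq> \<Union>B" using L(1) by blast
  have L2: "infinite (L - {mn L})" using L(2) by simp
  have x: "mn L \<in> \<Union>B" using L(1) m(1) by blast
  have "binit B (insert (mn L) (L - {mn L})) \<lhd> binit B (L - {mn L})"
    by (rule pred_shift(1)[OF B L1 L2 x m(2)])
  then show ?thesis unfolding e .
qed

definition BR :: "(nat set set \<times> nat set set) set" where
  "BR = {(B', B). barrier B' \<and> barrier B \<and> (\<exists>n. \<forall>s\<in>B'. (\<forall>y\<in>s. n < y) \<and> insert n s \<in> B)}"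

lemma barrier_has_ne: assumes "barrier B" shows "\<exists>s. s \<in> B \<and> s \<noteq> {}"
proof -
  have "infinite B" using assms unfolding barrier_def by blast
  then obtain s where "s \<in> B" by (metis finite.emptyI ex_in_conv)
  then show ?thesis using barrier_nempty[OF assms] by blast
qed

lemma wf_BR: "wf BR"
proof (rule ccontr)
  assume "\<not> wf BR"
  then obtain F where F: "\<And>i. (F (Suc i), F i) \<in> BR" unfolding wf_iff_no_infinite_down_chain by blast
  have "\<forall>i. \<exists>n. \<forall>s\<in>F (Suc i). (\<forall>y\<in>s. n < y) \<and> insert n s \<in> F i" using F unfolding BR_def by blast
  then obtain n where n: "\<And>i. \<forall>s\<in>F (Suc i). (\<forall>y\<in>s. n i < y) \<and> insert (n i) s \<in> F i" by metis
  have bar: "\<And>i. barrier (F i)" using F unfolding BR_def by blast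
  have acc: "s \<union> n ` {..<k} \<in> F 0" if "s \<in> F k" for k s
    using that
  proof (induction k arbitrary: s)
    case 0 then show ?case by simp
  next
    case (Suc k)
    then have "insert (n k) s \<in> F k" using n by blast
    then have "insert (n k) s \<union> n ` {..<k} \<in> F 0" using Suc.IH by blast
    moreover have "insert (n k) s \<union> n ` {..<k} = s \<union> n ` {..<Suc k}" by (auto simp: lessThan_Suc)
    ultimately show ?case by simp
  qed
  have sm: "strict_mono n"
    unfolding strict_mono_Suc_iff
  proof
    fix k
    obtain s where s: "s \<in> F (Suc (Suc k))" using barrier_has_ne[OF bar] by blast
    then have "insert (n (Suc k)) s \<in> F (Suc k)" using n by blast
    then show "n k < n (Suc k)" using n[of k] by blast
  qed
  have X: "range n \<subseteq> \<Union>(F 0)"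
  proof
    fix y assume "y \<in> range n"
    then obtain k where "y = n k" by blast
    obtain s where "s \<in> F (Suc k)" using barrier_has_ne[OF bar] by blast
    then have "s \<union> n ` {..<Suc k} \<in> F 0" by (rule acc)
    moreover have "y \<in> s \<union> n ` {..<Suc k}" using \<open>y = n k\<close> by simp
    ultimately show "y \<in> \<Union>(F 0)" by blast
  qed
  have "infinite (range n)" using sm
    by (simp add: finite_image_iff strict_mono_imp_inj_on infinite_UNIV_nat)
  then obtain s0 where s0: "s0 \<in> F 0" "init_seg s0 (range n)"
    using binit_ex[OF bar X] by blast
  have "finite s0" using bar[of 0] s0(1) unfolding barrier_def by blast
  moreover have "s0 \<subseteq> range n" using s0(2) unfolding init_seg_def by blast
  ultimately obtain k where k: "s0 \<subseteq> n ` {..<k}" using fin_subset_range[OF sm] by blast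
  obtain t where t: "t \<in> F (Suc k)" "t \<noteq> {}" using barrier_has_ne[OF bar] by blast
  then obtain y where "y \<in> t" by blast
  then have "n k < y" using n[of k] t(1) by blast
  then have "y \<notin> n ` {..<k}" using sm by (auto dest: strict_mono_less[OF sm, THEN iffD2] )
  have w: "t \<union> n ` {..<Suc k} \<in> F 0" using acc[OF t(1)] .
  have "s0 \<subseteq> t \<union> n ` {..<Suc k}" using k by (auto simp: lessThan_Suc)
  then have "s0 = t \<union> n ` {..<Suc k}" using barrier_antichain[OF bar s0(1) w] by blast
  then have "y \<in> s0" using \<open>y \<in> t\<close> by blast
  then show False using k \<open>y \<notin> n ` {..<k}\<close> by blast
qed

definition Tset :: "nat set set \<Rightarrow> nat set \<Rightarrow> nat set set" where
  "Tset B u = {t\<in>B. init_seg u t \<and> u \<noteq> t}"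



lemma constancy:
  fixes g :: "nat set \<Rightarrow> 'b"
  assumes B: "barrier B" and fin: "finite S"
  shows "infinite M \<Longrightarrow> M \<subseteq> \<Union>B \<Longrightarrow> (\<forall>z\<in>u. \<forall>y\<in>M. z < y) \<Longrightarrow>
    (\<forall>t\<in>Tset B u. t \<subseteq> u \<union> M \<longrightarrow> g t \<in> S) \<Longrightarrow>
    \<exists>M'\<subseteq>M. infinite M' \<and> (\<exists>c. \<forall>t\<in>Tset B u. t \<subseteq> u \<union> M' \<longrightarrow> g t = c)"
  using fin
proof (induction S arbitrary: M rule: finite_induct)
  case empty
  show ?case
  proof (intro exI[of _ M] conjI)
    show "M \<subseteq> M" by simp
    show "infinite M" using empty.prems(1) .
    have "\<forall>t\<in>Tset B u. t \<subseteq> u \<union> M \<longrightarrow> False" using empty.prems(4) by blast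
    then show "\<exists>c. \<forall>t\<in>Tset B u. t \<subseteq> u \<union> M \<longrightarrow> g t = c" by blast
  qed
next
  case (insert c S)
  define F where "F = {t - u | t. t \<in> Tset B u \<and> g t = c}"
  obtain N where N: "N \<subseteq> M" "infinite N"
    and dis: "(\<forall>s. finite s \<longrightarrow> s \<subseteq> N \<longrightarrow> s \<notin> F) \<or>
           (\<forall>L. L \<subseteq> N \<longrightarrow> infinite L \<longrightarrow> (\<exists>v. finite v \<and> init_seg v L \<and> v \<in> F))"
    using nash_williams[OF insert.prems(1), of F] by blast
  from dis show ?case
  proof
    assume a: "\<forall>s. finite s \<longrightarrow> s \<subseteq> N \<longrightarrow> s \<notin> F"
    have "\<forall>t\<in>Tset B u. t \<subseteq> u \<union> N \<longrightarrow> g t \<in> S"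
    proof (intro ballI impI)
      fix t assume t: "t \<in> Tset B u" "t \<subseteq> u \<union> N"
      then have "t \<subseteq> u \<union> M" using N(1) by blast
      moreover from insert.prems(4) t(1) have "t \<subseteq> u \<union> M \<longrightarrow> g t \<in> insert c S" by (rule bspec)
      ultimately have "g t \<in> insert c S" by (rule rev_mp)
      moreover have "g t \<noteq> c"
      proof
        assume "g t = c"
        then have "t - u \<in> F" using t(1) unfolding F_def by blast
        moreover have "finite (t - u)" using t(1) B unfolding Tset_def barrier_def by blast
        moreover have "t - u \<subseteq> N" using t(2) by blast
        ultimately show False using a by blast
      qed
      ultimately show "g t \<in> S" by simp
    qed
    moreover have "N \<subseteq> \<Union>B" using N(1) insert.prems(2) by blast
    moreover have "\<forall>z\<in>u. \<forall>y\<in>N. z < y" using N(1) insert.prems(3) by blast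
    ultimately obtain M' where "M' \<subseteq> N" "infinite M'" "\<exists>c. \<forall>t\<in>Tset B u. t \<subseteq> u \<union> M' \<longrightarrow> g t = c"
      using insert.IH[OF N(2)] by blast
    then show ?thesis using N(1) by blast
  next
    assume a: "\<forall>L. L \<subseteq> N \<longrightarrow> infinite L \<longrightarrow> (\<exists>v. finite v \<and> init_seg v L \<and> v \<in> F)"
    have "\<forall>t\<in>Tset B u. t \<subseteq> u \<union> N \<longrightarrow> g t = c"
    proof (intro ballI impI)
      fix t assume t: "t \<in> Tset B u" "t \<subseteq> u \<union> N"
      have tB: "t \<in> B" "init_seg u t" "u \<noteq> t" using t(1) unfolding Tset_def by auto
      have tfin: "finite t" using tB(1) B unfolding barrier_def by blast
      have ut: "u \<subseteq> t" using tB(2) unfolding init_seg_def by blast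
      define L where "L = (t - u) \<union> {y\<in>N. Max t < y}"
      have LN: "L \<subseteq> N" unfolding L_def using t(2) by blast
      have Linf: "infinite L" unfolding L_def using infinite_tail[OF N(2)] by simp
      obtain v where v: "init_seg v L" "v \<in> F" using a LN Linf by blast
      then obtain t' where t': "t' \<in> Tset B u" "g t' = c" "v = t' - u" unfolding F_def by blast
      have t'B: "t' \<in> B" "init_seg u t'" using t'(1) unfolding Tset_def by auto
      have ut': "u \<subseteq> t'" using t'B(2) unfolding init_seg_def by blast
      have uM: "\<forall>z\<in>u. \<forall>y\<in>L. z < y" using insert.prems(3) LN N(1) by blast
      have i1: "init_seg t (u \<union> L)"
        unfolding init_seg_def
      proof (intro conjI ballI impI)
        show "t \<subseteq> u \<union> L" unfolding L_def by blast
        fix z y assume z: "z \<in> t" and y: "y \<in> u \<union> L" "y < z"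
        have "z \<le> Max t" using Max_ge[OF tfin z] .
        show "y \<in> t"
        proof (cases "y \<in> u")
          case True then show ?thesis using ut by blast
        next
          case False
          then have "y \<in> L" using y(1) by blast
          then show ?thesis using y(2) \<open>z \<le> Max t\<close> unfolding L_def by auto
        qed
      qed
      have i2: "init_seg t' (u \<union> L)"
        unfolding init_seg_def
      proof (intro conjI ballI impI)
        show "t' \<subseteq> u \<union> L" using v(1) t'(3) unfolding init_seg_def by blast
        fix z y assume z: "z \<in> t'" and y: "y \<in> u \<union> L" "y < z"
        show "y \<in> t'"
        proof (cases "y \<in> u")
          case True then show ?thesis using ut' by blast
        next
          case False
          then have yL: "y \<in> L" using y(1) by blast
          show ?thesis
          proof (cases "z \<in> u")
            case True
            then have "z < y" using uM yL by blast
            then show ?thesis using y(2) by simp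
          next
            case False
            then have "z \<in> v" using z t'(3) by blast
            then have "y \<in> v" using v(1) yL y(2) unfolding init_seg_def by blast
            then show ?thesis using t'(3) by blast
          qed
        qed
      qed
      have "t = t'" using barrier_unique[OF B tB(1) t'B(1) i1 i2] .
      then show "g t = c" using t'(2) by simp
    qed
    then show ?thesis using N by blast
  qed
qed

locale badsetup =
  fixes A :: "'a set" and r :: "'a rel" and C :: "'c::linorder set"
    and B :: "nat set set" and f :: "nat set \<Rightarrow> 'a"
  assumes io: "interval_order_in A r C" and wq: "wqo_on A r" and bar: "barrier B"
    and fA: "f ` B \<subseteq> A" and bad: "\<forall>s\<in>B. \<forall>t\<in>B. s \<lhd> t \<longrightarrow> (f s, f t) \<notin> r"
begin

definition P :: "nat \<Rightarrow> nat set \<Rightarrow> bool" where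
  "P x L \<longleftrightarrow> \<not> Up A r (f (binit B L)) \<subseteq> Up A r (f (binit B (insert x L)))"

lemma E1_step:
  assumes x: "x \<in> \<Union>B" and M: "M \<subseteq> \<Union>B" "infinite M" "\<forall>y\<in>M. x < y"
    and H: "\<not> (\<exists>x0 N. x0 \<in> \<Union>B \<and> N \<subseteq> \<Union>B \<and> infinite N \<and> (\<forall>y\<in>N. x0 < y) \<and>
       (\<forall>L. L \<subseteq> N \<longrightarrow> infinite L \<longrightarrow> \<not> P x0 L))"
  shows "\<exists>N\<subseteq>M. infinite N \<and> (\<forall>L. L \<subseteq> N \<longrightarrow> infinite L \<longrightarrow> P x L)"
proof -
  define G where "G = {t\<in>B. \<exists>L. L \<subseteq> M \<and> infinite L \<and> binit B L = t \<and> P x L}"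
  obtain N where N: "N \<subseteq> M" "infinite N"
    and dis: "(\<forall>s. finite s \<longrightarrow> s \<subseteq> N \<longrightarrow> s \<notin> G) \<or>
           (\<forall>L. L \<subseteq> N \<longrightarrow> infinite L \<longrightarrow> (\<exists>u. finite u \<and> init_seg u L \<and> u \<in> G))"
    using nash_williams[OF M(2), of G] by blast
  from dis show ?thesis
  proof
    assume a: "\<forall>s. finite s \<longrightarrow> s \<subseteq> N \<longrightarrow> s \<notin> G"
    have "\<forall>L. L \<subseteq> N \<longrightarrow> infinite L \<longrightarrow> \<not> P x L"
    proof (intro allI impI)
      fix L assume LN: "L \<subseteq> N" and Li: "infinite L"
      have L: "L \<subseteq> \<Union>B" using LN N(1) M(1) by blast
      have bi: "binit B L \<in> B" "init_seg (binit B L) L" "finite (binit B L)" using binit[OF bar L Li] by auto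
      have "binit B L \<subseteq> N" using bi(2) LN unfolding init_seg_def by blast
      then have "binit B L \<notin> G" using a bi(3) by blast
      then show "\<not> P x L" using LN N(1) Li bi(1) unfolding G_def by blast
    qed
    moreover have "N \<subseteq> \<Union>B" using N(1) M(1) by blast
    moreover have "\<forall>y\<in>N. x < y" using N(1) M(3) by blast
    ultimately have False using H x N(2) by blast
    then show ?thesis by simp
  next
    assume a: "\<forall>L. L \<subseteq> N \<longrightarrow> infinite L \<longrightarrow> (\<exists>u. finite u \<and> init_seg u L \<and> u \<in> G)"
    have "\<forall>L. L \<subseteq> N \<longrightarrow> infinite L \<longrightarrow> P x L"
    proof (intro allI impI)
      fix L assume LN: "L \<subseteq> N" and Li: "infinite L"
      obtain u where u: "init_seg u L" "u \<in> G" using a LN Li by blast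
      then obtain L' where L': "L' \<subseteq> M" "infinite L'" "binit B L' = u" "P x L'" and uB: "u \<in> B"
        unfolding G_def by blast
      have L: "L \<subseteq> \<Union>B" using LN N(1) M(1) by blast
      have xL: "\<forall>y\<in>L. x < y" using LN N(1) M(3) by blast
      have L'B: "L' \<subseteq> \<Union>B" using L'(1) M(1) by blast
      have xL': "\<forall>y\<in>L'. x < y" using L'(1) M(3) by blast
      have bL: "binit B L = u" using binit_eq[OF bar uB u(1)] .
      have i1: "init_seg (binit B (insert x L)) (insert x u)" using pred_shift(2)[OF bar L Li x xL] bL by simp
      have i2: "init_seg (binit B (insert x L')) (insert x u)" using pred_shift(2)[OF bar L'B L'(2) x xL'] L'(3) by simp
      have b1: "binit B (insert x L) \<in> B" using binit(1)[OF bar] L Li x by simp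
      have b2: "binit B (insert x L') \<in> B" using binit(1)[OF bar] L'B L'(2) x by simp
      have same: "binit B (insert x L) = binit B (insert x L')" using barrier_unique[OF bar b1 b2 i1 i2] .
      show "P x L" using L'(4) same bL L'(3) unfolding P_def by simp
    qed
    then show ?thesis using N by blast
  qed
qed

lemma E1:
  "\<exists>x0 N. x0 \<in> \<Union>B \<and> N \<subseteq> \<Union>B \<and> infinite N \<and> (\<forall>y\<in>N. x0 < y) \<and>
       (\<forall>L. L \<subseteq> N \<longrightarrow> infinite L \<longrightarrow> \<not> P x0 L)"
proof (rule ccontr)
  assume H: "\<not> ?thesis"
  define I where "I = (\<lambda>p M. M \<subseteq> \<Union>B \<and> (\<forall>x\<in>p. x \<in> \<Union>B \<and> (\<forall>y\<in>M. x < y) \<and> (\<forall>L. L \<subseteq> M \<longrightarrow> infinite L \<longrightarrow> P x L)))"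
  have stp: "\<exists>x N. x \<in> M \<and> N \<subseteq> M \<and> infinite N \<and> (\<forall>y\<in>N. x < y) \<and> I (insert x p) N"
    if a: "I p M" "infinite M" for p M
  proof -
    define x where "x = mn M"
    have xM: "x \<in> M" "\<forall>y\<in>M - {x}. x < y" using mn_inf[OF a(2)] unfolding x_def by auto
    define M1 where "M1 = {y\<in>M. x < y}"
    have M1: "M1 \<subseteq> \<Union>B" "infinite M1" "\<forall>y\<in>M1. x < y"
      using a(1) infinite_tail[OF a(2)] unfolding M1_def I_def by auto
    have xB: "x \<in> \<Union>B" using xM(1) a(1) unfolding I_def by blast
    obtain N where N: "N \<subseteq> M1" "infinite N" "\<forall>L. L \<subseteq> N \<longrightarrow> infinite L \<longrightarrow> P x L"
      using E1_step[OF xB M1 H] by blast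
    have NM: "N \<subseteq> M" using N(1) unfolding M1_def by blast
    have "I (insert x p) N"
      unfolding I_def
    proof (rule conjI)
      show "N \<subseteq> \<Union>B" using NM a(1) unfolding I_def by blast
    next
      show "\<forall>z\<in>insert x p. z \<in> \<Union>B \<and> (\<forall>y\<in>N. z < y) \<and> (\<forall>L. L \<subseteq> N \<longrightarrow> infinite L \<longrightarrow> P z L)"
      proof (rule ballI)
      fix z assume "z \<in> insert x p"
      then show "z \<in> \<Union>B \<and> (\<forall>y\<in>N. z < y) \<and> (\<forall>L. L \<subseteq> N \<longrightarrow> infinite L \<longrightarrow> P z L)"
      proof
        assume "z = x" then show ?thesis using xB N M1(3) by blast
      next
        assume "z \<in> p"
        then have "z \<in> \<Union>B \<and> (\<forall>y\<in>M. z < y) \<and> (\<forall>L. L \<subseteq> M \<longrightarrow> infinite L \<longrightarrow> P z L)"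
          using a(1) unfolding I_def by blast
        then show ?thesis using NM by blast
      qed
      qed
    qed
    then show ?thesis using xM(1) NM N(2) N(1) M1(3) by blast
  qed
  have I0: "I {} (\<Union>B)" unfolding I_def by simp
  obtain xs Ms where F: "Ms 0 = \<Union>B" "\<forall>k. xs k \<in> Ms k \<and> Ms (Suc k) \<subseteq> Ms k \<and> infinite (Ms k) \<and>
      (\<forall>y\<in>Ms (Suc k). xs k < y) \<and> I ({} \<union> xs ` {..<k}) (Ms k)"
    using fusion[of I "{}" "\<Union>B", OF I0 union_barrier_infinite[OF bar] stp] by blast
  have F2: "\<forall>k. xs k \<in> Ms k \<and> Ms (Suc k) \<subseteq> Ms k \<and> (\<forall>y\<in>Ms (Suc k). xs k < y)" using F(2) by blast
  note fp = fusion_props[OF F2]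
  define Ls where "Ls = (\<lambda>k. xs ` {k..})"
  have Ls_sub: "Ls k \<subseteq> Ms k" for k unfolding Ls_def using fp(2) by blast
  have Ls_ins: "Ls k = insert (xs k) (Ls (Suc k))" for k
  proof -
    have "{k..} = insert k {Suc k..}" by auto
    then show ?thesis unfolding Ls_def by simp
  qed
  have Ls_inf: "infinite (Ls k)" for k
  proof -
    have "inj_on xs {k..}" using strict_mono_imp_inj_on[OF fp(1)] by (simp add: inj_on_subset)
    moreover have "infinite {k::nat..}" by (simp add: infinite_Ici)
    ultimately show ?thesis unfolding Ls_def using finite_imageD by blast
  qed
  have LsB: "Ls k \<subseteq> \<Union>B" for k using Ls_sub[of k] fp(3)[of 0 k] F(1) by blast
  have Pk: "P (xs k) (Ls (Suc k))" for k
  proof -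
    have "I ({} \<union> xs ` {..<Suc k}) (Ms (Suc k))" using F(2) by blast
    moreover have "xs k \<in> {} \<union> xs ` {..<Suc k}" by simp
    ultimately have "\<forall>L. L \<subseteq> Ms (Suc k) \<longrightarrow> infinite L \<longrightarrow> P (xs k) L" unfolding I_def by blast
    then show ?thesis using Ls_sub[of "Suc k"] Ls_inf[of "Suc k"] by blast
  qed
  define g where "g = (\<lambda>k. f (binit B (Ls k)))"
  have gA: "g k \<in> A" for k unfolding g_def using binit(1)[OF bar LsB Ls_inf] fA by blast
  have asc: "Up A r (g k) \<subset> Up A r (g (Suc k))" for k
  proof -
    have "\<not> Up A r (g (Suc k)) \<subseteq> Up A r (g k)"
      using Pk[of k] Ls_ins[of k] unfolding P_def g_def by simp
    then show ?thesis using Up_chain[OF io gA gA] by blast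
  qed
  show False by (rule Up_no_ascending[of A r C g, OF io wq gA asc])
qed

end



lemma barrier_finite: "barrier B \<Longrightarrow> s \<in> B \<Longrightarrow> finite s"
  unfolding barrier_def by (elim conjE) (erule bspec)

context badsetup
begin

lemma F1:
  assumes x0: "x0 \<in> \<Union>B" and N: "N \<subseteq> \<Union>B" "infinite N" "\<forall>y\<in>N. x0 < y"
    and E: "\<forall>L. L \<subseteq> N \<longrightarrow> infinite L \<longrightarrow> \<not> P x0 L"
    and u: "u \<subseteq> N" "insert x0 u \<in> B" and t: "t \<in> Tset B u" "t \<subseteq> N"
  shows "f t \<in> Kset A r (f (insert x0 u))"
proof -
  have tB: "t \<in> B" "init_seg u t" "u \<noteq> t" using t(1) unfolding Tset_def by auto
  have tfin: "finite t" using barrier_finite[OF bar tB(1)] .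
  define L where "L = t \<union> {y\<in>N. Max t < y}"
  have LN: "L \<subseteq> N" unfolding L_def using t(2) by blast
  have Linf: "infinite L" unfolding L_def using infinite_tail[OF N(2)] by simp
  have itL: "init_seg t L" unfolding L_def by (rule init_seg_tail[OF tfin t(2)])
  have bL: "binit B L = t" using binit_eq[OF bar tB(1) itL] .
  have x0L: "\<forall>y\<in>L. x0 < y" using LN N(3) by blast
  have iuL: "init_seg u L" using init_seg_trans[OF tB(2) itL] .
  have "init_seg (insert x0 u) (insert x0 L)" using init_seg_insert_min[OF iuL x0L] .
  then have bL': "binit B (insert x0 L) = insert x0 u" using binit_eq[OF bar u(2)] by blast
  have "\<not> P x0 L" using E LN Linf by blast
  then have sub: "Up A r (f t) \<subseteq> Up A r (f (insert x0 u))" unfolding P_def bL bL' by simp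
  have x0t: "\<forall>y\<in>t. x0 < y" using t(2) N(3) by blast
  have sh: "insert x0 u \<lhd> t" using shift_insert[OF tfin x0t tB(2) tB(3)] .
  have "(f (insert x0 u), f t) \<notin> r" using bad u(2) tB(1) sh by blast
  then have "f t \<notin> Up A r (f (insert x0 u))" unfolding Up_def by blast
  moreover have "f t \<in> A" using fA tB(1) by blast
  ultimately show ?thesis using sub unfolding Kset_def by blast
qed

lemma E3:
  assumes x0: "x0 \<in> \<Union>B" and N: "N \<subseteq> \<Union>B" "infinite N" "\<forall>y\<in>N. x0 < y"
    and E: "\<forall>L. L \<subseteq> N \<longrightarrow> infinite L \<longrightarrow> \<not> P x0 L"
    and nx0: "{x0} \<notin> B"
  shows "\<exists>N'\<subseteq>N. infinite N' \<and> (\<forall>u. u \<subseteq> N' \<longrightarrow> insert x0 u \<in> B \<longrightarrow> (\<exists>c. \<forall>t\<in>Tset B u. t \<subseteq> N' \<longrightarrow> f t = c))"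
proof -
  define I where "I = (\<lambda>p M. finite p \<and> M \<subseteq> N \<and> p \<subseteq> N \<and> (\<forall>z\<in>p. \<forall>y\<in>M. z < y) \<and>
     (\<forall>u. u \<subseteq> p \<longrightarrow> insert x0 u \<in> B \<longrightarrow> (\<exists>c. \<forall>t\<in>Tset B u. t \<subseteq> p \<union> M \<longrightarrow> f t = c)))"
  have stp: "\<exists>x N'. x \<in> M \<and> N' \<subseteq> M \<and> infinite N' \<and> (\<forall>y\<in>N'. x < y) \<and> I (insert x p) N'"
    if a: "I p M" "infinite M" for p M
  proof -
    have aI: "finite p" "M \<subseteq> N" "p \<subseteq> N" "\<forall>z\<in>p. \<forall>y\<in>M. z < y"
        "\<And>u. u \<subseteq> p \<Longrightarrow> insert x0 u \<in> B \<Longrightarrow> (\<exists>c. \<forall>t\<in>Tset B u. t \<subseteq> p \<union> M \<longrightarrow> f t = c)"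
      using a(1) unfolding I_def by auto
    define x where "x = mn M"
    have xM: "x \<in> M" using mn_inf[OF a(2)] unfolding x_def by auto
    define M1 where "M1 = {y\<in>M. x < y}"
    have M1: "M1 \<subseteq> M" "infinite M1" "\<forall>y\<in>M1. x < y"
      unfolding M1_def using infinite_tail[OF a(2)] by auto
    have multi: "U \<subseteq> Pow p \<Longrightarrow> \<exists>M'\<subseteq>M1. infinite M' \<and> (\<forall>u\<in>U. insert x0 (insert x u) \<in> B \<longrightarrow>
        (\<exists>c. \<forall>t\<in>Tset B (insert x u). t \<subseteq> insert x u \<union> M' \<longrightarrow> f t = c))" if "finite U" for U
      using that
    proof (induction U rule: finite_induct)
      case empty then show ?case using M1 by blast
    next
      case (insert u U)
      have "U \<subseteq> Pow p" using insert.prems by simp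
      then obtain M2 where M2: "M2 \<subseteq> M1" "infinite M2"
          "\<forall>u\<in>U. insert x0 (insert x u) \<in> B \<longrightarrow> (\<exists>c. \<forall>t\<in>Tset B (insert x u). t \<subseteq> insert x u \<union> M2 \<longrightarrow> f t = c)"
        using insert.IH by blast
      show ?case
      proof (cases "insert x0 (insert x u) \<in> B")
        case False
        then have "\<forall>u'\<in>insert u U. insert x0 (insert x u') \<in> B \<longrightarrow>
            (\<exists>c. \<forall>t\<in>Tset B (insert x u'). t \<subseteq> insert x u' \<union> M2 \<longrightarrow> f t = c)"
          using M2(3) by blast
        then show ?thesis using M2(1,2) by blast
      next
        case True
        have up: "u \<subseteq> p" using insert.prems by simp
        have u'N: "insert x u \<subseteq> N" using up aI(3) xM aI(2) by blast
        have M2B: "M2 \<subseteq> \<Union>B" using M2(1) M1(1) aI(2) N(1) by blast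
        have lt: "\<forall>z\<in>insert x u. \<forall>y\<in>M2. z < y"
        proof (intro ballI)
          fix z y assume z: "z \<in> insert x u" and y: "y \<in> M2"
          show "z < y"
          proof (cases "z = x")
            case True then show ?thesis using y M2(1) M1(3) by blast
          next
            case False
            then have "z \<in> p" using z up by blast
            then show ?thesis using aI(4) y M2(1) M1(1) by blast
          qed
        qed
        have inS: "\<forall>t\<in>Tset B (insert x u). t \<subseteq> insert x u \<union> M2 \<longrightarrow> f t \<in> Kset A r (f (insert x0 (insert x u)))"
        proof (intro ballI impI)
          fix t assume t: "t \<in> Tset B (insert x u)" "t \<subseteq> insert x u \<union> M2"
          have "t \<subseteq> N" using t(2) u'N M2(1) M1(1) aI(2) by blast
          then show "f t \<in> Kset A r (f (insert x0 (insert x u)))" using F1[OF x0 N E u'N True t(1)] by blast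
        qed
        obtain M3 where M3: "M3 \<subseteq> M2" "infinite M3"
            "\<exists>c. \<forall>t\<in>Tset B (insert x u). t \<subseteq> insert x u \<union> M3 \<longrightarrow> f t = c"
          using constancy[OF bar Kset_finite[OF io wq] M2(2) M2B lt inS] by blast
        have "\<forall>u'\<in>insert u U. insert x0 (insert x u') \<in> B \<longrightarrow>
            (\<exists>c. \<forall>t\<in>Tset B (insert x u'). t \<subseteq> insert x u' \<union> M3 \<longrightarrow> f t = c)"
        proof (intro ballI impI)
          fix u' assume u': "u' \<in> insert u U" "insert x0 (insert x u') \<in> B"
          show "\<exists>c. \<forall>t\<in>Tset B (insert x u'). t \<subseteq> insert x u' \<union> M3 \<longrightarrow> f t = c"
          proof (cases "u' = u")
            case True then show ?thesis using M3(3) by simp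
          next
            case False
            then have "u' \<in> U" using u'(1) by simp
            then obtain c where c: "\<forall>t\<in>Tset B (insert x u'). t \<subseteq> insert x u' \<union> M2 \<longrightarrow> f t = c"
              using M2(3) u'(2) by blast
            have ss: "insert x u' \<union> M3 \<subseteq> insert x u' \<union> M2" using M3(1) by blast
            show ?thesis
            proof (intro exI[of _ c] ballI impI)
              fix t assume t: "t \<in> Tset B (insert x u')" "t \<subseteq> insert x u' \<union> M3"
              have "t \<subseteq> insert x u' \<union> M2" using t(2) ss by (rule subset_trans)
              then show "f t = c" using c t(1) by blast
            qed
          qed
        qed
        moreover have "M3 \<subseteq> M1" using M3(1) M2(1) by blast
        ultimately show ?thesis using M3(2) by blast
      qed
    qed
    have "finite (Pow p)" using aI(1) by simp
    then obtain M' where M': "M' \<subseteq> M1" "infinite M'"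
        "\<forall>u\<in>Pow p. insert x0 (insert x u) \<in> B \<longrightarrow> (\<exists>c. \<forall>t\<in>Tset B (insert x u). t \<subseteq> insert x u \<union> M' \<longrightarrow> f t = c)"
      using multi[of "Pow p"] by blast
    have "I (insert x p) M'"
      unfolding I_def
    proof (intro conjI allI impI ballI)
      show "finite (insert x p)" using aI(1) by simp
      show "M' \<subseteq> N" using M'(1) M1(1) aI(2) by blast
      show "insert x p \<subseteq> N" using aI(3) xM aI(2) by blast
    next
      fix z y assume z: "z \<in> insert x p" and y: "y \<in> M'"
      show "z < y"
      proof (cases "z = x")
        case True then show ?thesis using y M'(1) M1(3) by blast
      next
        case False
        then have "z \<in> p" using z by blast
        then show ?thesis using aI(4) y M'(1) M1(1) by blast
      qed
    next
      fix u assume us: "u \<subseteq> insert x p" and uB: "insert x0 u \<in> B"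
      show "\<exists>c. \<forall>t\<in>Tset B u. t \<subseteq> insert x p \<union> M' \<longrightarrow> f t = c"
      proof (cases "x \<in> u")
        case False
        then have "u \<subseteq> p" using us by blast
        then obtain c where c: "\<forall>t\<in>Tset B u. t \<subseteq> p \<union> M \<longrightarrow> f t = c" using aI(5) uB by blast
        have ss: "insert x p \<union> M' \<subseteq> p \<union> M" using xM M'(1) M1(1) by blast
        show ?thesis
        proof (intro exI[of _ c] ballI impI)
          fix t assume t: "t \<in> Tset B u" "t \<subseteq> insert x p \<union> M'"
          have "t \<subseteq> p \<union> M" using t(2) ss by (rule subset_trans)
          then show "f t = c" using c t(1) by blast
        qed
      next
        case True
        define u0 where "u0 = u - {x}"
        have u0: "u0 \<in> Pow p" "insert x u0 = u" using us True unfolding u0_def by auto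
        from M'(3) u0(1) have "insert x0 (insert x u0) \<in> B \<longrightarrow> (\<exists>c. \<forall>t\<in>Tset B (insert x u0). t \<subseteq> insert x u0 \<union> M' \<longrightarrow> f t = c)"
          by (rule bspec)
        then obtain c where c: "\<forall>t\<in>Tset B u. t \<subseteq> u \<union> M' \<longrightarrow> f t = c" using u0(2) uB by auto
        have sub: "t \<subseteq> u \<union> M'" if t: "t \<in> Tset B u" "t \<subseteq> insert x p \<union> M'" for t
        proof
          fix y assume y: "y \<in> t"
          show "y \<in> u \<union> M'"
          proof (cases "y \<in> u")
            case False
            have "init_seg u t" using t(1) unfolding Tset_def by blast
            then have "\<not> y < x" using False True y unfolding init_seg_def by blast
            moreover have "y \<noteq> x" using False True by blast
            ultimately have "x < y" by simp
            have "y \<notin> p"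
            proof
              assume "y \<in> p"
              then have "y < x" using aI(4) xM by blast
              then show False using \<open>x < y\<close> by simp
            qed
            then show ?thesis using t(2) y \<open>y \<noteq> x\<close> by blast
          qed simp
        qed
        show ?thesis
        proof (intro exI[of _ c] ballI impI)
          fix t assume t: "t \<in> Tset B u" "t \<subseteq> insert x p \<union> M'"
          have "t \<subseteq> u \<union> M'" using sub[OF t] .
          then show "f t = c" using c t(1) by blast
        qed
      qed
    qed
    moreover have "M' \<subseteq> M" using M'(1) M1(1) by blast
    moreover have "\<forall>y\<in>M'. x < y" using M'(1) M1(3) by blast
    ultimately show ?thesis using xM M'(2) by blast
  qed
  have I0: "I {} N" unfolding I_def using nx0 by auto
  obtain xs Ms where F: "Ms 0 = N" "\<forall>k. xs k \<in> Ms k \<and> Ms (Suc k) \<subseteq> Ms k \<and> infinite (Ms k) \<and>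
      (\<forall>y\<in>Ms (Suc k). xs k < y) \<and> I ({} \<union> xs ` {..<k}) (Ms k)"
    using fusion[of I "{}" N, OF I0 N(2) stp] by blast
  have F2: "\<forall>k. xs k \<in> Ms k \<and> Ms (Suc k) \<subseteq> Ms k \<and> (\<forall>y\<in>Ms (Suc k). xs k < y)" using F(2) by blast
  note fp = fusion_props[OF F2]
  show ?thesis
  proof (intro exI[of _ "range xs"] conjI allI impI)
    show "range xs \<subseteq> N"
    proof
      fix y assume "y \<in> range xs"
      then obtain k where "y = xs k" by blast
      moreover have "xs k \<in> Ms k" using F2 by blast
      moreover have "I ({} \<union> xs ` {..<k}) (Ms k)" using F(2) by blast
      then have "Ms k \<subseteq> N" unfolding I_def by (elim conjE)
      ultimately show "y \<in> N" by blast
    qed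
    show "infinite (range xs)" using fp(1)
      by (simp add: finite_image_iff strict_mono_imp_inj_on infinite_UNIV_nat)
    fix u assume u: "u \<subseteq> range xs" "insert x0 u \<in> B"
    have "finite (insert x0 u)" using barrier_finite[OF bar u(2)] .
    then have "finite u" by simp
    then obtain k where k: "u \<subseteq> xs ` {..<k}" using fin_subset_range[OF fp(1)] u(1) by blast
    have "I ({} \<union> xs ` {..<k}) (Ms k)" using F(2) by blast
    then have "\<forall>u. u \<subseteq> xs ` {..<k} \<longrightarrow> insert x0 u \<in> B \<longrightarrow> (\<exists>c. \<forall>t\<in>Tset B u. t \<subseteq> xs ` {..<k} \<union> Ms k \<longrightarrow> f t = c)"
      unfolding I_def by simp
    then obtain c where c: "\<forall>t\<in>Tset B u. t \<subseteq> xs ` {..<k} \<union> Ms k \<longrightarrow> f t = c" using k u(2) by blast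
    have rs: "range xs \<subseteq> xs ` {..<k} \<union> Ms k"
    proof
      fix y assume "y \<in> range xs"
      then obtain j where j: "y = xs j" by blast
      show "y \<in> xs ` {..<k} \<union> Ms k"
      proof (cases "j < k")
        case True then show ?thesis using j by blast
      next
        case False then show ?thesis using j fp(2)[of k j] by simp
      qed
    qed
    show "\<exists>c. \<forall>t\<in>Tset B u. t \<subseteq> range xs \<longrightarrow> f t = c"
    proof (intro exI[of _ c] ballI impI)
      fix t assume t: "t \<in> Tset B u" "t \<subseteq> range xs"
      have "t \<subseteq> xs ` {..<k} \<union> Ms k" using t(2) rs by (rule subset_trans)
      then show "f t = c" using c t(1) by blast
    qed
  qed
qed

end



lemma init_seg_sub: "init_seg s X \<Longrightarrow> s \<subseteq> X" unfolding init_seg_def by blast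

context badsetup
begin

lemma no_singleton:
  assumes x0: "x0 \<in> \<Union>B" and N: "N \<subseteq> \<Union>B" "infinite N" "\<forall>y\<in>N. x0 < y"
    and E: "\<forall>L. L \<subseteq> N \<longrightarrow> infinite L \<longrightarrow> \<not> P x0 L"
  shows "{x0} \<notin> B"
proof
  assume sB: "{x0} \<in> B"
  have lt: "\<forall>z\<in>{}. \<forall>y\<in>N. z < y" by simp
  have inS: "\<forall>t\<in>Tset B {}. t \<subseteq> {} \<union> N \<longrightarrow> f t \<in> Kset A r (f (insert x0 {}))"
  proof (intro ballI impI)
    fix t assume t: "t \<in> Tset B {}" "t \<subseteq> {} \<union> N"
    have "t \<subseteq> N" using t(2) by simp
    moreover have "{} \<subseteq> N" by simp
    moreover have "insert x0 {} \<in> B" using sB by simp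
    ultimately show "f t \<in> Kset A r (f (insert x0 {}))" using F1[OF x0 N E _ _ t(1)] by blast
  qed
  obtain M' c where M': "M' \<subseteq> N" "infinite M'" "\<forall>t\<in>Tset B {}. t \<subseteq> {} \<union> M' \<longrightarrow> f t = c"
    using constancy[OF bar Kset_finite[OF io wq] N(2) N(1) lt inS] by blast
  have M'B: "M' \<subseteq> \<Union>B" using M'(1) N(1) by blast
  define s where "s = binit B M'"
  define t where "t = binit B (M' - {mn M'})"
  have st: "s \<lhd> t" unfolding s_def t_def by (rule shift_binit[OF bar M'B M'(2)])
  have M2B: "M' - {mn M'} \<subseteq> \<Union>B" using M'B by blast
  have M2i: "infinite (M' - {mn M'})" using M'(2) by simp
  have sB': "s \<in> B" "init_seg s M'" "s \<noteq> {}" unfolding s_def using binit[OF bar M'B M'(2)] by auto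
  have tB': "t \<in> B" "init_seg t (M' - {mn M'})" "t \<noteq> {}" unfolding t_def using binit[OF bar M2B M2i] by auto
  have "s \<in> Tset B {}" using sB' unfolding Tset_def init_seg_def by auto
  moreover have "s \<subseteq> {} \<union> M'" using sB'(2) unfolding init_seg_def by auto
  ultimately have fs: "f s = c" using M'(3) by blast
  have "t \<in> Tset B {}" using tB' unfolding Tset_def init_seg_def by auto
  moreover have "t \<subseteq> {} \<union> M'" using tB'(2) unfolding init_seg_def by auto
  ultimately have ft: "f t = c" using M'(3) by blast
  have "(f s, f t) \<notin> r" using bad sB'(1) tB'(1) st by blast
  moreover have "f s \<in> A" using fA sB'(1) by blast
  moreover have "refl_on A r" using io unfolding interval_order_in_def partial_order_on_def preorder_on_def by blast
  ultimately show False using fs ft unfolding refl_on_def by auto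
qed

lemma main_step:
  "\<exists>B' d. (B', B) \<in> BR \<and> d ` B' \<subseteq> A \<and> (\<forall>s\<in>B'. \<forall>t\<in>B'. s \<lhd> t \<longrightarrow> (d s, d t) \<notin> r)"
proof -
  obtain x0 N where x0: "x0 \<in> \<Union>B" and N: "N \<subseteq> \<Union>B" "infinite N" "\<forall>y\<in>N. x0 < y"
    and E: "\<forall>L. L \<subseteq> N \<longrightarrow> infinite L \<longrightarrow> \<not> P x0 L"
    using E1 by blast
  have nx0: "{x0} \<notin> B" by (rule no_singleton[OF x0 N E])
  obtain N' where N': "N' \<subseteq> N" "infinite N'"
    and cst: "\<forall>u. u \<subseteq> N' \<longrightarrow> insert x0 u \<in> B \<longrightarrow> (\<exists>c. \<forall>t\<in>Tset B u. t \<subseteq> N' \<longrightarrow> f t = c)"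
    using E3[OF x0 N E nx0] by blast
  have N'B: "N' \<subseteq> \<Union>B" using N' N(1) by blast
  have x0N': "\<forall>y\<in>N'. x0 < y" using N' N(3) by blast
  define B' where "B' = {u. u \<subseteq> N' \<and> insert x0 u \<in> B}"
  define tl where "tl = (\<lambda>u. {y\<in>N'. Max u < y})"
  define d where "d = (\<lambda>u. f (binit B (u \<union> tl u)))"
  have B'ne: "u \<noteq> {}" if "u \<in> B'" for u using that nx0 unfolding B'_def by auto
  have B'fin: "finite u" if "u \<in> B'" for u
    using barrier_finite[OF bar, of "insert x0 u"] that unfolding B'_def by simp
  have x0u: "x0 \<notin> u" if "u \<in> B'" for u using that x0N' unfolding B'_def by blast
  have B'N: "u \<subseteq> N'" if "u \<in> B'" for u using that unfolding B'_def by blast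
  have inT: "binit B L \<in> Tset B u \<and> binit B L \<subseteq> N'"
    if u: "u \<in> B'" and L: "init_seg u L" "L \<subseteq> N'" "infinite L" for u L
  proof -
    have w: "insert x0 u \<in> B" "u \<subset> insert x0 u" using u x0u[OF u] unfolding B'_def by auto
    have LB: "L \<subseteq> \<Union>B" using L(2) N'B by blast
    have "init_seg u (binit B L)" "u \<noteq> binit B L" using proper_T[OF bar w L(1) LB L(3)] by auto
    moreover have "binit B L \<in> B" "init_seg (binit B L) L" using binit[OF bar LB L(3)] by auto
    ultimately have "binit B L \<in> Tset B u" unfolding Tset_def by blast
    moreover have "binit B L \<subseteq> L" using \<open>init_seg (binit B L) L\<close> by (rule init_seg_sub)
    ultimately show ?thesis using L(2) by blast
  qed
  have tlp: "init_seg u (u \<union> tl u)" "u \<union> tl u \<subseteq> N'" "infinite (u \<union> tl u)" if "u \<in> B'" for u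
  proof -
    show "init_seg u (u \<union> tl u)" unfolding tl_def by (rule init_seg_tail[OF B'fin[OF that] B'N[OF that]])
    show "u \<union> tl u \<subseteq> N'" using B'N[OF that] unfolding tl_def by blast
    show "infinite (u \<union> tl u)" unfolding tl_def using infinite_tail[OF N'(2)] by simp
  qed
  have dc: "f t = d u" if u: "u \<in> B'" and t: "t \<in> Tset B u" "t \<subseteq> N'" for u t
  proof -
    obtain c where c: "\<forall>t\<in>Tset B u. t \<subseteq> N' \<longrightarrow> f t = c" using cst u unfolding B'_def by blast
    have "binit B (u \<union> tl u) \<in> Tset B u \<and> binit B (u \<union> tl u) \<subseteq> N'"
      using inT[OF u tlp[OF u]] .
    then have "d u = c" unfolding d_def using c by blast
    moreover have "f t = c" using c t by blast
    ultimately show ?thesis by simp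
  qed
  have helper: "\<exists>u\<in>B'. u \<noteq> {} \<and> init_seg u X \<and> u \<subseteq> X" if X: "X \<subseteq> N'" "infinite X" for X
  proof -
    have XB: "insert x0 X \<subseteq> \<Union>B" "infinite (insert x0 X)" using X N'B x0 by auto
    define s where "s = binit B (insert x0 X)"
    have s: "s \<in> B" "init_seg s (insert x0 X)" "s \<noteq> {}" unfolding s_def using binit[OF bar XB] by auto
    have x0X: "\<forall>y\<in>X. x0 < y" using X(1) x0N' by blast
    have "x0 \<in> s"
    proof -
      obtain z where "z \<in> s" using s(3) by blast
      show ?thesis
      proof (cases "z = x0")
        case False
        then have "z \<in> X" using \<open>z \<in> s\<close> s(2) unfolding init_seg_def by blast
        then have "x0 < z" using x0X by blast
        then show ?thesis using \<open>z \<in> s\<close> s(2) unfolding init_seg_def by blast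
      qed (use \<open>z \<in> s\<close> in simp)
    qed
    define u where "u = s - {x0}"
    have su: "insert x0 u = s" unfolding u_def using \<open>x0 \<in> s\<close> by blast
    have uX: "u \<subseteq> X" unfolding u_def using s(2) unfolding init_seg_def by blast
    have uB': "u \<in> B'" unfolding B'_def using su s(1) uX X(1) by blast
    have "init_seg u X"
      unfolding init_seg_def
    proof (intro conjI ballI impI)
      show "u \<subseteq> X" by (rule uX)
      fix z y assume z: "z \<in> u" and y: "y \<in> X" "y < z"
      have "y \<in> s" using s(2) z y unfolding u_def init_seg_def by blast
      moreover have "y \<noteq> x0" using y(1) x0X by blast
      ultimately show "y \<in> u" unfolding u_def by blast
    qed
    then show ?thesis using uB' B'ne[OF uB'] uX by blast
  qed
  have barB': "barrier B'"
    unfolding barrier_def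
  proof (intro conjI ballI allI impI)
    show "infinite B'"
    proof
      assume fB: "finite B'"
      have "finite (\<Union>B')" using fB B'fin by blast
      define m where "m = Max (insert 0 (\<Union>B'))"
      have mge: "y \<le> m" if "y \<in> \<Union>B'" for y unfolding m_def using \<open>finite (\<Union>B')\<close> that by simp
      define Z where "Z = {y\<in>N'. m < y}"
      have Z: "Z \<subseteq> N'" "infinite Z" unfolding Z_def using infinite_tail[OF N'(2)] by auto
      from helper[OF Z] obtain u where u: "u \<in> B'" "u \<noteq> {}" "u \<subseteq> Z" by blast
      then obtain y where "y \<in> u" by blast
      then have "y \<le> m" using mge u(1) by blast
      moreover have "m < y" using \<open>y \<in> u\<close> u(3) unfolding Z_def by blast
      ultimately show False by simp
    qed
  next
    fix s assume "s \<in> B'" then show "finite s" by (rule B'fin)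
  next
    fix s t assume st: "s \<in> B'" "t \<in> B'"
    show "\<not> s \<subset> t"
    proof
      assume "s \<subset> t"
      then have ss: "insert x0 s \<subseteq> insert x0 t" "s \<noteq> t" by blast+
      have "insert x0 s \<noteq> insert x0 t" using ss(2) insert_ident[OF x0u[OF st(1)] x0u[OF st(2)]] by simp
      moreover have "insert x0 s \<in> B" "insert x0 t \<in> B" using st unfolding B'_def by auto
      ultimately show False using barrier_antichain[OF bar _ _ ss(1)] by blast
    qed
  next
    fix X assume X: "X \<subseteq> \<Union>B'" "infinite X"
    have "\<Union>B' \<subseteq> N'" unfolding B'_def by blast
    then have "X \<subseteq> N'" using X(1) by blast
    from helper[OF this X(2)] show "\<exists>s\<in>B'. s \<noteq> {} \<and> init_seg s X" by blast
  qed
  have BR: "(B', B) \<in> BR"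
    unfolding BR_def using barB' bar x0N' unfolding B'_def by blast
  have dA: "d ` B' \<subseteq> A"
  proof
    fix y assume "y \<in> d ` B'"
    then obtain u where u: "u \<in> B'" "y = d u" by blast
    have "u \<union> tl u \<subseteq> \<Union>B" using tlp(2)[OF u(1)] N'B by blast
    then have "binit B (u \<union> tl u) \<in> B" using binit(1)[OF bar _ tlp(3)[OF u(1)]] by blast
    then show "y \<in> A" using u(2) fA unfolding d_def by blast
  qed
  have dbad: "\<forall>s\<in>B'. \<forall>t\<in>B'. s \<lhd> t \<longrightarrow> (d s, d t) \<notin> r"
  proof (intro ballI impI)
    fix u1 u2 assume u: "u1 \<in> B'" "u2 \<in> B'" and sh: "u1 \<lhd> u2"
    obtain r' where r': "finite r'" "init_seg u1 r'" "u1 \<noteq> r'" "u2 = r' - {Min r'}"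
      using sh unfolding shift_rel_def by blast
    have "u1 \<noteq> {}" using B'ne[OF u(1)] .
    then obtain z where z: "z \<in> u1" by blast
    have zr: "z \<in> r'" using z r'(2) unfolding init_seg_def by blast
    then have rne: "r' \<noteq> {}" by blast
    have minr: "Min r' \<in> r'" using Min_in[OF r'(1) rne] .
    have "Min r' \<le> z" using Min_le[OF r'(1) zr] .
    then have minu1: "Min r' \<in> u1"
    proof (cases "Min r' = z")
      case False
      then have "Min r' < z" using \<open>Min r' \<le> z\<close> by simp
      then show ?thesis using r'(2) z minr unfolding init_seg_def by blast
    qed (use z in simp)
    have rsub: "r' \<subseteq> N'"
    proof
      fix y assume "y \<in> r'"
      then have "y \<in> u1 \<or> y \<in> u2" using r'(4) minu1 by blast
      then show "y \<in> N'" using B'N u by blast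
    qed
    define L where "L = r' \<union> {y\<in>N'. Max r' < y}"
    have LN: "L \<subseteq> N'" unfolding L_def using rsub by blast
    have Li: "infinite L" unfolding L_def using infinite_tail[OF N'(2)] by simp
    have LB: "L \<subseteq> \<Union>B" using LN N'B by blast
    have irL: "init_seg r' L" unfolding L_def by (rule init_seg_tail[OF r'(1) rsub])
    have mnL: "mn L = Min r'"
    proof -
      have "mn L \<in> L" using mn_inf[OF Li] by blast
      have "Min r' \<in> L" using minr unfolding L_def by blast
      then have le1: "mn L \<le> Min r'" by (rule mn(2))
      have "Min r' \<le> mn L"
      proof (cases "mn L \<in> r'")
        case True then show ?thesis using Min_le[OF r'(1)] by blast
      next
        case False
        then have "Max r' < mn L" using \<open>mn L \<in> L\<close> unfolding L_def by blast
        moreover have "Min r' \<le> Max r'" using Min_le[OF r'(1)] Max_ge[OF r'(1)] minr by (meson order_trans)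
        ultimately show ?thesis by simp
      qed
      then show ?thesis using le1 by simp
    qed
    define t1 where "t1 = binit B L"
    define t2 where "t2 = binit B (L - {mn L})"
    have sh12: "t1 \<lhd> t2" unfolding t1_def t2_def by (rule shift_binit[OF bar LB Li])
    have t1B: "t1 \<in> B" unfolding t1_def using binit(1)[OF bar LB Li] .
    have L2B: "L - {mn L} \<subseteq> \<Union>B" using LB by blast
    have L2i: "infinite (L - {mn L})" using Li by simp
    have t2B: "t2 \<in> B" unfolding t2_def using binit(1)[OF bar L2B L2i] .
    have "(f t1, f t2) \<notin> r" using bad t1B t2B sh12 by blast
    have iu1: "init_seg u1 L" using init_seg_trans[OF r'(2) irL] .
    have "t1 \<in> Tset B u1 \<and> t1 \<subseteq> N'" unfolding t1_def using inT[OF u(1) iu1 LN Li] .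
    then have d1: "d u1 = f t1" using dc[OF u(1)] by simp
    have iu2: "init_seg u2 (L - {mn L})"
      unfolding init_seg_def
    proof (intro conjI ballI impI)
      show "u2 \<subseteq> L - {mn L}" using r'(4) mnL unfolding L_def by blast
      fix z y assume z: "z \<in> u2" and y: "y \<in> L - {mn L}" "y < z"
      have "z \<in> r'" using z r'(4) by blast
      then have "y \<in> r'" using irL y unfolding init_seg_def by blast
      then show "y \<in> u2" using y(1) r'(4) mnL by auto
    qed
    have L2N: "L - {mn L} \<subseteq> N'" using LN by blast
    have "t2 \<in> Tset B u2 \<and> t2 \<subseteq> N'" unfolding t2_def using inT[OF u(2) iu2 L2N L2i] .
    then have d2: "d u2 = f t2" using dc[OF u(2)] by simp
    show "(d u1, d u2) \<notin> r" using d1 d2 \<open>(f t1, f t2) \<notin> r\<close> by simp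
  qed
  show ?thesis using BR dA dbad by blast
qed

end

lemma wqo_barrier_good:
  fixes C :: "'c::linorder set"
  assumes io: "interval_order_in A r C" and wq: "wqo_on A r"
  shows "\<forall>f :: nat set \<Rightarrow> 'a. barrier B \<longrightarrow> f ` B \<subseteq> A \<longrightarrow> good r B f"
proof (induction B rule: wf_induct[OF wf_BR])
  case (1 B)
  show ?case
  proof (intro allI impI)
    fix f :: "nat set \<Rightarrow> 'a" assume bB: "barrier B" and fA: "f ` B \<subseteq> A"
    show "good r B f"
    proof (rule ccontr)
      assume "\<not> good r B f"
      then have bad: "\<forall>s\<in>B. \<forall>t\<in>B. s \<lhd> t \<longrightarrow> (f s, f t) \<notin> r" unfolding good_def by blast
      interpret badsetup A r C B f using io wq bB fA bad by unfold_locales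
      obtain B' d where B': "(B', B) \<in> BR" "d ` B' \<subseteq> A" "\<forall>s\<in>B'. \<forall>t\<in>B'. s \<lhd> t \<longrightarrow> (d s, d t) \<notin> r"
        using main_step by blast
      have "barrier B'" using B'(1) unfolding BR_def by blast
      then have "good r B' d" using 1 B'(1,2) by blast
      then show False using B'(3) unfolding good_def by blast
    qed
  qed
qed


theorem theorem1p6:
  fixes A :: "'a set" and r :: "'a rel" and C :: "'c::linorder set"
  assumes "interval_order_in A r C"
  shows "bqo_on A r \<longleftrightarrow> wqo_on A r"
proof
  assume "bqo_on A r" then show "wqo_on A r" by (rule bqo_imp_wqo)
next
  assume wq: "wqo_on A r"
  show "bqo_on A r" unfolding bqo_on_def
  proof (intro conjI allI impI)
    show "preorder_on A r" using wq unfolding wqo_on_def by blast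
    fix \<alpha> :: "nat rel" assume "Well_order \<alpha>" "countable (Field \<alpha>)"
    show "alpha_bqo \<alpha> A r" unfolding alpha_bqo_def
      using wqo_barrier_good[OF assms wq] by blast
  qed
qed

end
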